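(* The following decision problem is undecidable. Input: a FIFO automaton $A$ satisfying (R1) and (R2), and a letter $m$. Question: is there a trace $\tau$ such that $\tau\cdot ?m$ is a trace of $A$ (i.e. $c_0\xrightarrow{\tau\cdot ?m}c$ for some configuration $c$, where $c_0$ is the initial configuration of $A$)?
   Context: A FIFO automaton is a finite automaton $A=(Q,\mathrm{Act}(\Sigma),\Delta,q_0)$ with all states accepting, over the alphabet $\mathrm{Act}(\Sigma)=\{!a,?a\mid a\in\Sigma\}$ for a finite set $\Sigma$, operating on a single unbounded FIFO queue. A configuration is $(q,w)\in Q\times\Sigma^*$, stable if $w$ is empty; the initial configuration is $c_0=(q_0,\varepsilon)$. A transition $(q,!a,q')$ takes $(q,w)$ to $(q',w a)$; a transition $(q,?a,q')$ takes $(q,a w)$ to $(q',w)$. A trace of $A$ is a sequence of actions $\tau$ with $c_0\xrightarrow{\tau}c$ for some $c$. Restrictions: (R1) whenever $c_0\xrightarrow{\tau}(q,w)$, either $\tau$ is empty or $w\neq\varepsilon$ (every reachable configuration other than the initial one is unstable); (R2) every transition $(q_0,\alpha,q)\in\Delta$ leaving the initial state has $\alpha=!a$ for some $a\in\Sigma$. *)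

theory Defs
  imports Main "HOL-Library.Nat_Bijection"
begin

datatype recf =
    Zf
  | Sf
  | Idf nat
  | Cnf recf "recf list"
  | Prf recf recf
  | Mnf recf

inductive eval :: "recf \<Rightarrow> nat list \<Rightarrow> nat \<Rightarrow> bool" where
  ev_Z: "eval Zf xs 0"
| ev_S: "eval Sf (x # xs) (Suc x)"
| ev_Id: "i < length xs \<Longrightarrow> eval (Idf i) xs (xs ! i)"
| ev_Cn: "list_all2 (\<lambda>g z. eval g xs z) gs zs \<Longrightarrow> eval f zs y \<Longrightarrow> eval (Cnf f gs) xs y"
| ev_Pr0: "eval f xs y \<Longrightarrow> eval (Prf f g) (0 # xs) y"
| ev_PrS: "eval (Prf f g) (n # xs) z \<Longrightarrow> eval g (n # z # xs) y \<Longrightarrow> eval (Prf f g) (Suc n # xs) y"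
| ev_Mn: "eval f (y # xs) 0 \<Longrightarrow> (\<And>z. z < y \<Longrightarrow> \<exists>v. v \<noteq> 0 \<and> eval f (z # xs) v)
          \<Longrightarrow> eval (Mnf f) xs y"

text \<open>States and letters are natural numbers (any finite automaton is isomorphic
  to one of this form). The transition relation is given as a finite list.\<close>
datatype act = Send nat | Recv nat

type_synonym trans = "nat \<times> act \<times> nat"
type_synonym config = "nat \<times> nat list"

fun step :: "trans list \<Rightarrow> config \<Rightarrow> act \<Rightarrow> config \<Rightarrow> bool" where
  "step \<Delta> (q, w) (Send a) (q', w') \<longleftrightarrow> (q, Send a, q') \<in> set \<Delta> \<and> w' = w @ [a]"
| "step \<Delta> (q, w) (Recv a) (q', w') \<longleftrightarrow> (q, Recv a, q') \<in> set \<Delta> \<and> w = a # w'"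

fun steps :: "trans list \<Rightarrow> config \<Rightarrow> act list \<Rightarrow> config \<Rightarrow> bool" where
  "steps \<Delta> c [] c' \<longleftrightarrow> c' = c"
| "steps \<Delta> c (\<alpha> # \<tau>) c' \<longleftrightarrow> (\<exists>c''. step \<Delta> c \<alpha> c'' \<and> steps \<Delta> c'' \<tau> c')"

definition is_trace :: "trans list \<Rightarrow> nat \<Rightarrow> act list \<Rightarrow> bool" where
  "is_trace \<Delta> q0 \<tau> \<longleftrightarrow> (\<exists>c. steps \<Delta> (q0, []) \<tau> c)"

definition R1 :: "trans list \<Rightarrow> nat \<Rightarrow> bool" where
  "R1 \<Delta> q0 \<longleftrightarrow> (\<forall>\<tau> q w. steps \<Delta> (q0, []) \<tau> (q, w) \<longrightarrow> \<tau> = [] \<or> w \<noteq> [])"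

definition R2 :: "trans list \<Rightarrow> nat \<Rightarrow> bool" where
  "R2 \<Delta> q0 \<longleftrightarrow> (\<forall>\<alpha> q. (q0, \<alpha>, q) \<in> set \<Delta> \<longrightarrow> (\<exists>a. \<alpha> = Send a))"

definition can_receive :: "trans list \<Rightarrow> nat \<Rightarrow> nat \<Rightarrow> bool" where
  "can_receive \<Delta> q0 m \<longleftrightarrow> (\<exists>\<tau>. is_trace \<Delta> q0 (\<tau> @ [Recv m]))"

fun encode_act :: "act \<Rightarrow> nat" where
  "encode_act (Send a) = 2 * a"
| "encode_act (Recv a) = 2 * a + 1"

fun encode_trans :: "trans \<Rightarrow> nat" where
  "encode_trans (q, \<alpha>, q') = prod_encode (q, prod_encode (encode_act \<alpha>, q'))"

definition encode_instance :: "trans list \<Rightarrow> nat \<Rightarrow> nat \<Rightarrow> nat" where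
  "encode_instance \<Delta> q0 m = prod_encode (list_encode (map encode_trans \<Delta>), prod_encode (q0, m))"

end

theory Submission
  imports Defs
begin


lemma evId: "i < length xs \<Longrightarrow> y = xs ! i \<Longrightarrow> eval (Idf i) xs y"
  using ev_Id by simp
lemma evS: "y = Suc x \<Longrightarrow> eval Sf (x # xs) y"
  using ev_S by simp
lemma evZ: "y = 0 \<Longrightarrow> eval Zf xs y"
  using ev_Z by simp
lemma evCn1: "eval g xs z \<Longrightarrow> eval f [z] y \<Longrightarrow> eval (Cnf f [g]) xs y"
  by (rule ev_Cn) auto
lemma evCn2: "eval g1 xs z1 \<Longrightarrow> eval g2 xs z2 \<Longrightarrow> eval f [z1, z2] y \<Longrightarrow> eval (Cnf f [g1, g2]) xs y"
  by (rule ev_Cn) auto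
lemmas evI = evId evS evCn1 evCn2 evZ ev_Pr0

fun constf :: "nat \<Rightarrow> recf" where
  "constf 0 = Zf" | "constf (Suc n) = Cnf Sf [constf n]"

lemma eval_constf: "eval (constf n) xs n"
  by (induction n) (auto intro!: evI)

definition "addf = Prf (Idf 0) (Cnf Sf [Idf 1])"
lemma eval_addf: "y = a + b \<Longrightarrow> eval addf [a, b] y"
  unfolding addf_def
proof (induction a arbitrary: y)
  case 0 then show ?case by (auto intro!: evI)
next
  case (Suc a)
  have "eval (Cnf Sf [Idf 1]) [a, a+b, b] y"
    using Suc by (auto intro!: evI)
  then show ?case using Suc by (auto intro: ev_PrS)
qed

definition "mulf = Prf Zf (Cnf addf [Idf 1, Idf 2])"
lemma eval_mulf: "y = a * b \<Longrightarrow> eval mulf [a, b] y"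
  unfolding mulf_def
proof (induction a arbitrary: y)
  case 0 then show ?case by (auto intro!: evI)
next
  case (Suc a)
  have "eval (Cnf addf [Idf 1, Idf 2]) [a, a*b, b] y"
    using Suc by (auto intro!: evI eval_addf)
  then show ?case using Suc by (auto intro: ev_PrS)
qed

definition "predf = Prf Zf (Idf 0)"
lemma eval_predf: "y = a - 1 \<Longrightarrow> eval predf [a] y"
  unfolding predf_def
proof (induction a arbitrary: y)
  case 0 then show ?case by (auto intro!: evI)
next
  case (Suc n)
  have "eval (Idf 0) [n, n - 1] y" using Suc by (auto intro!: evI)
  then show ?case using Suc by (auto intro: ev_PrS)
qed

definition "rsubf = Prf (Idf 0) (Cnf predf [Idf 1])"
lemma eval_rsubf: "y = a - n \<Longrightarrow> eval rsubf [n, a] y"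
  unfolding rsubf_def
proof (induction n arbitrary: y)
  case 0 then show ?case by (auto intro!: evI)
next
  case (Suc n)
  have "eval (Cnf predf [Idf 1]) [n, a - n, a] y"
    using Suc by (auto intro!: evI eval_predf)
  then show ?case using Suc by (auto intro: ev_PrS)
qed

definition "sgbf = Prf (constf 1) Zf"
lemma eval_sgbf: "y = 1 - a \<Longrightarrow> eval sgbf [a] y"
  unfolding sgbf_def
proof (induction a arbitrary: y)
  case 0 then show ?case by (auto intro!: evI eval_constf)
next
  case (Suc n)
  have "eval Zf [n, 1 - n] y" using Suc by (auto intro!: evI)
  then show ?case using Suc by (auto intro: ev_PrS)
qed

definition "trif = Prf Zf (Cnf addf [Idf 1, Cnf Sf [Idf 0]])"
lemma eval_trif: "y = triangle a \<Longrightarrow> eval trif [a] y"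
  unfolding trif_def
proof (induction a arbitrary: y)
  case 0 then show ?case by (auto intro!: evI)
next
  case (Suc n)
  have "eval (Cnf addf [Idf 1, Cnf Sf [Idf 0]]) [n, triangle n] y"
    using Suc by (auto intro!: evI eval_addf)
  then show ?case using Suc by (auto intro: ev_PrS)
qed

definition "pef = Cnf addf [Cnf trif [addf], Idf 0]"
lemma eval_pef: "y = prod_encode (a, b) \<Longrightarrow> eval pef [a, b] y"
  unfolding pef_def prod_encode_def
  by (auto intro!: evI eval_addf eval_trif)

datatype ex = V nat | C nat | Add ex ex | Mul ex ex | Sub ex ex | PE ex ex | Sgb ex

fun exv :: "ex \<Rightarrow> nat list \<Rightarrow> nat" where
  "exv (V i) xs = xs ! i"
| "exv (C n) xs = n"
| "exv (Add a b) xs = exv a xs + exv b xs"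
| "exv (Mul a b) xs = exv a xs * exv b xs"
| "exv (Sub a b) xs = exv a xs - exv b xs"
| "exv (PE a b) xs = prod_encode (exv a xs, exv b xs)"
| "exv (Sgb a) xs = 1 - exv a xs"

fun exok :: "ex \<Rightarrow> nat \<Rightarrow> bool" where
  "exok (V i) n = (i < n)"
| "exok (C _) n = True"
| "exok (Add a b) n = (exok a n \<and> exok b n)"
| "exok (Mul a b) n = (exok a n \<and> exok b n)"
| "exok (Sub a b) n = (exok a n \<and> exok b n)"
| "exok (PE a b) n = (exok a n \<and> exok b n)"
| "exok (Sgb a) n = exok a n"

fun exf :: "ex \<Rightarrow> recf" where
  "exf (V i) = Idf i"
| "exf (C n) = constf n"
| "exf (Add a b) = Cnf addf [exf a, exf b]"
| "exf (Mul a b) = Cnf mulf [exf a, exf b]"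
| "exf (Sub a b) = Cnf rsubf [exf b, exf a]"
| "exf (PE a b) = Cnf pef [exf a, exf b]"
| "exf (Sgb a) = Cnf sgbf [exf a]"

lemma eval_exf: "exok e (length xs) \<Longrightarrow> eval (exf e) xs (exv e xs)"
  by (induction e) (auto intro!: evI eval_addf eval_mulf eval_rsubf eval_pef eval_sgbf eval_constf)

definition chain_tr :: "nat \<Rightarrow> nat \<Rightarrow> trans" where
  "chain_tr x j = (if j = 0 then 1 else 2*j, Send 1, if Suc j = x then 3 else 2*j+2)"

definition chain :: "nat \<Rightarrow> trans list" where
  "chain x = map (chain_tr x) [0..<x]"

definition consc :: "nat \<Rightarrow> nat \<Rightarrow> nat" where
  "consc a l = Suc (prod_encode (a, l))"

definition "ej = Sub (V 2) (Add (V 0) (C 1))"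
definition "et = Sub (V 2) (Add ej (C 1))"
definition "esrc = Add (Mul (C 2) ej) (Sgb ej)"
definition "etgt = Add (Mul (Sgb et) (C 3)) (Mul (Sub (C 1) (Sgb et)) (Add (Mul (C 2) ej) (C 2)))"
definition "eg = Add (C 1) (PE (PE esrc (PE (C 2) etgt)) (V 1))"

lemma exv_eg: "n < x \<Longrightarrow> exv eg [n, z, x] = consc (encode_trans (chain_tr x (x - Suc n))) z"
  by (auto simp: eg_def esrc_def etgt_def ej_def et_def chain_tr_def consc_def)

lemma exok_eg: "exok eg (Suc (Suc (Suc 0)))"
  by (simp add: eg_def esrc_def etgt_def ej_def et_def)

definition "hf = Prf (Idf 0) (exf eg)"

lemma eval_hf: "n \<le> x \<Longrightarrow> eval hf [n, x] (foldr consc (map (encode_trans \<circ> chain_tr x) [x-n..<x]) x)"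
proof (induction n)
  case 0 then show ?case by (auto simp: hf_def intro!: evI)
next
  case (Suc n)
  then have nx: "n < x" by simp
  have ups: "[x - Suc n..<x] = (x - Suc n) # [x - n..<x]"
    using nx by (simp add: upt_conv_Cons Suc_diff_Suc)
  have "eval (exf eg) [n, foldr consc (map (encode_trans \<circ> chain_tr x) [x-n..<x]) x, x]
     (exv eg [n, foldr consc (map (encode_trans \<circ> chain_tr x) [x-n..<x]) x, x])"
    by (rule eval_exf) (simp add: exok_eg)
  then show ?case using Suc nx ups exv_eg[OF nx] unfolding comp_def by (auto simp: hf_def intro: ev_PrS)
qed

lemma list_encode_append: "list_encode (xs @ ys) = foldr consc xs (list_encode ys)"
  by (induction xs) (auto simp: consc_def)

definition "eout = PE (Add (C 1) (PE (PE (C 0) (PE (C 6) (C 1))) (V 0))) (PE (C 0) (C 4))"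

definition "Ef = Cnf (exf eout) [Cnf hf [Idf 0, Idf 0]]"

lemma eval_Ef:
  assumes "x = list_encode (map encode_trans T)"
  shows "eval Ef [x] (encode_instance ((0, Send 3, 1) # chain x @ T) 0 4)"
proof -
  have h: "eval hf [x, x] (foldr consc (map (encode_trans \<circ> chain_tr x) [0..<x]) x)"
    using eval_hf[of x x] by simp
  have "eval (exf eout) [foldr consc (map (encode_trans \<circ> chain_tr x) [0..<x]) x]
     (exv eout [foldr consc (map (encode_trans \<circ> chain_tr x) [0..<x]) x])"
    by (rule eval_exf) (simp add: eout_def)
  moreover have "exv eout [foldr consc (map (encode_trans \<circ> chain_tr x) [0..<x]) x]
     = encode_instance ((0, Send 3, 1) # chain x @ T) 0 4"
    using assms by (simp add: eout_def encode_instance_def chain_def list_encode_append consc_def)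
  ultimately show ?thesis using h unfolding Ef_def
    by (auto intro!: evI)
qed


datatype cmd = Skip | Inc nat | Dec nat | Seq cmd cmd | While nat cmd

inductive exec :: "cmd \<Rightarrow> (nat \<Rightarrow> nat) \<Rightarrow> (nat \<Rightarrow> nat) \<Rightarrow> bool" where
  ex_Skip: "exec Skip s s"
| ex_Inc: "exec (Inc r) s (s(r := Suc (s r)))"
| ex_Dec: "exec (Dec r) s (s(r := s r - 1))"
| ex_Seq: "exec c1 s s1 \<Longrightarrow> exec c2 s1 s2 \<Longrightarrow> exec (Seq c1 c2) s s2"
| ex_W0: "s r = 0 \<Longrightarrow> exec (While r c) s s"
| ex_W1: "s r \<noteq> 0 \<Longrightarrow> exec c s s1 \<Longrightarrow> exec (While r c) s1 s2 \<Longrightarrow> exec (While r c) s s2"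

lemma while_inv:
  assumes step: "\<And>t. I t \<Longrightarrow> t r \<noteq> 0 \<Longrightarrow> \<exists>t'. exec c t t' \<and> I t' \<and> (m t' :: nat) < m t"
  shows "I t \<Longrightarrow> \<exists>t'. exec (While r c) t t' \<and> I t' \<and> t' r = 0"
proof (induction "m t" arbitrary: t rule: less_induct)
  case less
  show ?case
  proof (cases "t r = 0")
    case True then show ?thesis using less by (auto intro: ex_W0)
  next
    case False
    then obtain t1 where t1: "exec c t t1" "I t1" "m t1 < m t" using step less by blast
    then obtain t2 where "exec (While r c) t1 t2 \<and> I t2 \<and> t2 r = 0" using less by blast
    then show ?thesis using t1 False by (auto intro: ex_W1)
  qed
qed

lemma exSD: "exec c2 (s(r := s r - 1)) s2 \<Longrightarrow> exec (Seq (Dec r) c2) s s2"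
  by (rule ex_Seq[OF ex_Dec])
lemma exSI: "exec c2 (s(r := Suc (s r))) s2 \<Longrightarrow> exec (Seq (Inc r) c2) s s2"
  by (rule ex_Seq[OF ex_Inc])
lemma exD': "s' = s(r := s r - 1) \<Longrightarrow> exec (Dec r) s s'"
  using ex_Dec by simp
lemma exI': "s' = s(r := Suc (s r)) \<Longrightarrow> exec (Inc r) s s'"
  using ex_Inc by simp

definition "clear r = While r (Dec r)"

lemma exec_clear: "exec (clear r) s (s(r := 0))"
proof -
  have "\<exists>t'. exec (While r (Dec r)) s t' \<and> (\<forall>x. x \<noteq> r \<longrightarrow> t' x = s x) \<and> t' r = 0"
    by (rule while_inv[where m = "\<lambda>t. t r"]) (fastforce intro: ex_Dec)+
  then obtain t' where "exec (While r (Dec r)) s t'" "\<forall>x. x \<noteq> r \<longrightarrow> t' x = s x" "t' r = 0" by blast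
  moreover have "t' = s(r := 0)" using calculation by auto
  ultimately show ?thesis by (simp add: clear_def)
qed

definition "copy a b t = Seq (clear b) (Seq (clear t)
   (Seq (While a (Seq (Dec a) (Seq (Inc b) (Inc t)))) (While t (Seq (Dec t) (Inc a)))))"

lemma exec_copy:
  assumes "a \<noteq> b" "a \<noteq> t" "b \<noteq> t"
  shows "exec (copy a b t) s (s(b := s a, t := 0))"
proof -
  let ?s1 = "s(b := 0, t := 0)"
  have "\<exists>t'. exec (While a (Seq (Dec a) (Seq (Inc b) (Inc t)))) ?s1 t' \<and>
       ((\<forall>x. x \<noteq> a \<and> x \<noteq> b \<and> x \<noteq> t \<longrightarrow> t' x = s x) \<and> t' b = t' t \<and> t' a + t' b = s a) \<and> t' a = 0"
  proof (rule while_inv[where m = "\<lambda>x. x a"])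
    fix u assume "(\<forall>x. x \<noteq> a \<and> x \<noteq> b \<and> x \<noteq> t \<longrightarrow> u x = s x) \<and> u b = u t \<and> u a + u b = s a" "u a \<noteq> 0"
    then show "\<exists>t'. exec (Seq (Dec a) (Seq (Inc b) (Inc t))) u t' \<and>
       ((\<forall>x. x \<noteq> a \<and> x \<noteq> b \<and> x \<noteq> t \<longrightarrow> t' x = s x) \<and> t' b = t' t \<and> t' a + t' b = s a) \<and> t' a < u a"
      using assms by (intro exI[of _ "u(a := u a - 1, b := Suc (u b), t := Suc (u t))"]) (auto intro!: exSD exSI exI')
  qed (use assms in auto)
  then obtain s2 where s2: "exec (While a (Seq (Dec a) (Seq (Inc b) (Inc t)))) ?s1 s2"
    "\<forall>x. x \<noteq> a \<and> x \<noteq> b \<and> x \<noteq> t \<longrightarrow> s2 x = s x" "s2 b = s2 t" "s2 a + s2 b = s a" "s2 a = 0"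
    by blast
  have "\<exists>t'. exec (While t (Seq (Dec t) (Inc a))) s2 t' \<and>
       ((\<forall>x. x \<noteq> a \<and> x \<noteq> t \<longrightarrow> t' x = s2 x) \<and> t' a + t' t = s a) \<and> t' t = 0"
  proof (rule while_inv[where m = "\<lambda>x. x t"])
    fix u assume "(\<forall>x. x \<noteq> a \<and> x \<noteq> t \<longrightarrow> u x = s2 x) \<and> u a + u t = s a" "u t \<noteq> 0"
    then show "\<exists>t'. exec (Seq (Dec t) (Inc a)) u t' \<and>
       ((\<forall>x. x \<noteq> a \<and> x \<noteq> t \<longrightarrow> t' x = s2 x) \<and> t' a + t' t = s a) \<and> t' t < u t"
      using assms by (intro exI[of _ "u(t := u t - 1, a := Suc (u a))"]) (auto intro!: exSD exI')
  qed (use assms s2 in auto)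
  then obtain s3 where s3: "exec (While t (Seq (Dec t) (Inc a))) s2 s3"
    "\<forall>x. x \<noteq> a \<and> x \<noteq> t \<longrightarrow> s3 x = s2 x" "s3 a + s3 t = s a" "s3 t = 0" by blast
  have "s3 = s(b := s a, t := 0)"
  proof
    fix x show "s3 x = (s(b := s a, t := 0)) x"
      using s2 s3 assms by (cases "x = a"; cases "x = b"; cases "x = t") auto
  qed
  moreover have "exec (clear b) s (s(b := 0))" by (rule exec_clear)
  moreover have "exec (clear t) (s(b := 0)) ?s1" using exec_clear[of t "s(b:=0)"] by simp
  ultimately show ?thesis using s2(1) s3(1) unfolding copy_def by (blast intro: ex_Seq)
qed


lemma inv_Z: "eval Zf xs y \<Longrightarrow> y = 0" by (cases rule: eval.cases) auto
lemma inv_S: "eval Sf xs y \<Longrightarrow> \<exists>x xs'. xs = x # xs' \<and> y = Suc x" by (cases rule: eval.cases) auto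
lemma inv_Id: "eval (Idf i) xs y \<Longrightarrow> i < length xs \<and> y = xs ! i" by (cases rule: eval.cases) auto
lemma inv_Cn: "eval (Cnf f gs) xs y \<Longrightarrow> \<exists>zs. list_all2 (\<lambda>g z. eval g xs z) gs zs \<and> eval f zs y"
  by (cases rule: eval.cases) auto
lemma inv_Mn: "eval (Mnf f) xs y \<Longrightarrow> eval f (y # xs) 0 \<and> (\<forall>z<y. \<exists>v. v \<noteq> 0 \<and> eval f (z # xs) v)"
  by (cases rule: eval.cases) auto
lemma inv_Pr_Nil: "eval (Prf f g) [] y \<Longrightarrow> False" by (cases rule: eval.cases) auto

lemma inv_Pr: "eval (Prf f g) (n # xs) y \<Longrightarrow>
  \<exists>zs. length zs = Suc n \<and> zs ! n = y \<and> eval f xs (zs ! 0) \<and> (\<forall>j<n. eval g (j # zs ! j # xs) (zs ! Suc j))"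
proof (induction n arbitrary: y)
  case 0
  from 0 have "eval f xs y" by (cases rule: eval.cases) auto
  then show ?case by (intro exI[of _ "[y]"]) auto
next
  case (Suc n)
  from Suc.prems obtain z where z: "eval (Prf f g) (n # xs) z" "eval g (n # z # xs) y"
    by (cases rule: eval.cases) auto
  then obtain zs where zs: "length zs = Suc n" "zs ! n = z" "eval f xs (zs ! 0)"
     "\<forall>j<n. eval g (j # zs ! j # xs) (zs ! Suc j)" using Suc.IH by blast
  show ?case
  proof (intro exI[of _ "zs @ [y]"] conjI allI impI)
    fix j assume "j < Suc n"
    then show "eval g (j # (zs @ [y]) ! j # xs) ((zs @ [y]) ! Suc j)"
      using zs z by (cases "j = n") (auto simp: nth_append)
  qed (use zs in \<open>auto simp: nth_append\<close>)
qed

fun comp :: "recf \<Rightarrow> nat list \<Rightarrow> nat \<Rightarrow> nat \<Rightarrow> cmd"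
and compl :: "recf list \<Rightarrow> nat list \<Rightarrow> nat \<Rightarrow> nat \<Rightarrow> cmd" where
  "comp Zf ins out fr = clear out"
| "comp Sf ins out fr = (case ins of [] \<Rightarrow> Skip | r # _ \<Rightarrow> Seq (copy r out fr) (Inc out))"
| "comp (Idf i) ins out fr = (if i < length ins then copy (ins ! i) out fr else Skip)"
| "comp (Cnf f gs) ins out fr =
     Seq (compl gs ins fr (fr + length gs)) (comp f [fr..<fr + length gs] out (fr + length gs))"
| "comp (Prf f g) ins out fr = (case ins of [] \<Rightarrow> Skip | rn # xs \<Rightarrow>
     Seq (copy rn (fr+1) (fr+4)) (Seq (clear fr) (Seq (comp f xs (fr+2) (fr+4))
      (Seq (While (fr+1) (Seq (comp g (fr # (fr+2) # xs) (fr+3) (fr+4))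
              (Seq (copy (fr+3) (fr+2) (fr+4)) (Seq (Inc fr) (Dec (fr+1))))))
        (copy (fr+2) out (fr+4))))))"
| "comp (Mnf f) ins out fr = Seq (clear fr) (Seq (comp f (fr # ins) (fr+1) (fr+2))
     (Seq (While (fr+1) (Seq (Inc fr) (comp f (fr # ins) (fr+1) (fr+2)))) (copy fr out (fr+2))))"
| "compl [] ins j fr = Skip"
| "compl (g # gs) ins j fr = Seq (comp g ins j fr) (compl gs ins (Suc j) fr)"

definition post :: "nat \<Rightarrow> nat \<Rightarrow> nat \<Rightarrow> (nat \<Rightarrow> nat) \<Rightarrow> (nat \<Rightarrow> nat) \<Rightarrow> bool" where
  "post fr out y s s' \<longleftrightarrow> (\<forall>r<fr. s' r = (if r = out then y else s r))"

definition CC :: "recf \<Rightarrow> bool" where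
  "CC g \<longleftrightarrow> (\<forall>ins out fr s y. eval g (map s ins) y \<longrightarrow> (\<forall>r\<in>set ins. r < fr) \<longrightarrow> out < fr \<longrightarrow> out \<notin> set ins
     \<longrightarrow> (\<exists>s'. exec (comp g ins out fr) s s' \<and> post fr out y s s'))"

lemma CCD: "CC g \<Longrightarrow> eval g (map s ins) y \<Longrightarrow> (\<forall>r\<in>set ins. r < fr) \<Longrightarrow> out < fr \<Longrightarrow> out \<notin> set ins
     \<Longrightarrow> \<exists>s'. exec (comp g ins out fr) s s' \<and> post fr out y s s'"
  unfolding CC_def by blast

lemma map_eq_regs: "(\<forall>r\<in>set ins. t r = s r) \<Longrightarrow> map t ins = map s ins"
  by auto

lemma CC_Z: "CC Zf"
  unfolding CC_def post_def
  by (auto dest!: inv_Z intro!: exI[of _ "s(out := 0)" for s out] exec_clear)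

lemma CC_S: "CC Sf"
  unfolding CC_def
proof (intro allI impI)
  fix ins :: "nat list" and out fr y :: nat and s :: "nat \<Rightarrow> nat"
  assume e: "eval Sf (map s ins) y" and h: "\<forall>r\<in>set ins. r < fr" "out < fr" "out \<notin> set ins"
  obtain r rs where ins: "ins = r # rs" and y: "y = Suc (s r)" using inv_S[OF e] by (cases ins) auto
  have "exec (copy r out fr) s (s(out := s r, fr := 0))"
    by (rule exec_copy) (use h ins in auto)
  then have "exec (comp Sf ins out fr) s ((s(out := s r, fr := 0))(out := Suc (s r)))"
    using ins h by (auto intro!: ex_Seq exI')
  then show "\<exists>s'. exec (comp Sf ins out fr) s s' \<and> post fr out y s s'"
    using h y by (intro exI) (auto simp: post_def)
qed

lemma CC_Id: "CC (Idf i)"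
  unfolding CC_def
proof (intro allI impI)
  fix ins :: "nat list" and out fr y :: nat and s :: "nat \<Rightarrow> nat"
  assume e: "eval (Idf i) (map s ins) y" and h: "\<forall>r\<in>set ins. r < fr" "out < fr" "out \<notin> set ins"
  have i: "i < length ins" and y: "y = s (ins ! i)" using inv_Id[OF e] by auto
  have "exec (copy (ins ! i) out fr) s (s(out := s (ins ! i), fr := 0))"
    by (rule exec_copy) (use h i nth_mem[OF i] in auto)
  then show "\<exists>s'. exec (comp (Idf i) ins out fr) s s' \<and> post fr out y s s'"
    using h i y by (intro exI) (auto simp: post_def)
qed

lemma compl_correct:
  "(\<forall>g\<in>set gs. CC g) \<Longrightarrow> list_all2 (\<lambda>g z. eval g (map s ins) z) gs zs \<Longrightarrow> (\<forall>r\<in>set ins. r < j)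
   \<Longrightarrow> j + length gs \<le> fr \<Longrightarrow>
   \<exists>s'. exec (compl gs ins j fr) s s' \<and> (\<forall>r<fr. s' r = (if j \<le> r \<and> r < j + length gs then zs ! (r - j) else s r))"
proof (induction gs arbitrary: zs j s)
  case Nil then show ?case by (auto intro: ex_Skip)
next
  case (Cons g gs)
  obtain z zs' where zs: "zs = z # zs'" "eval g (map s ins) z" "list_all2 (\<lambda>g z. eval g (map s ins) z) gs zs'"
    using Cons.prems(2) by (cases zs) auto
  obtain s1 where s1: "exec (comp g ins j fr) s s1" "post fr j z s s1"
    using CCD[of g s ins z fr j] Cons.prems zs by force
  have m: "map s1 ins = map s ins"
    using s1(2) Cons.prems unfolding post_def by (intro map_eq_regs) force
  obtain s2 where s2: "exec (compl gs ins (Suc j) fr) s1 s2"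
    "\<forall>r<fr. s2 r = (if Suc j \<le> r \<and> r < Suc j + length gs then zs' ! (r - Suc j) else s1 r)"
    using Cons.IH[of s1 zs' "Suc j"] Cons.prems zs m by force
  show ?case
  proof (intro exI conjI allI impI)
    show "exec (compl (g # gs) ins j fr) s s2" using s1 s2 by (auto intro: ex_Seq)
    fix r assume r: "r < fr"
    show "s2 r = (if j \<le> r \<and> r < j + length (g # gs) then zs ! (r - j) else s r)"
    proof (cases "r = j")
      case True then show ?thesis using s1(2) s2(2) r zs unfolding post_def by auto
    next
      case False
      then show ?thesis using s1(2) s2(2) r zs unfolding post_def
        by (auto simp: Suc_diff_Suc[symmetric] nth_Cons')
    qed
  qed
qed

lemma CC_Cn: "CC f \<Longrightarrow> (\<forall>g\<in>set gs. CC g) \<Longrightarrow> CC (Cnf f gs)"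
  unfolding CC_def[of "Cnf f gs"]
proof (intro allI impI)
  fix ins :: "nat list" and out fr y :: nat and s :: "nat \<Rightarrow> nat"
  assume f: "CC f" and gs: "\<forall>g\<in>set gs. CC g"
  assume e: "eval (Cnf f gs) (map s ins) y" and h: "\<forall>r\<in>set ins. r < fr" "out < fr" "out \<notin> set ins"
  obtain zs where zs: "list_all2 (\<lambda>g z. eval g (map s ins) z) gs zs" "eval f zs y"
    using inv_Cn[OF e] by blast
  have len: "length zs = length gs" using zs(1) list_all2_lengthD by metis
  obtain s1 where s1: "exec (compl gs ins fr (fr + length gs)) s s1"
    "\<forall>r<fr + length gs. s1 r = (if fr \<le> r \<and> r < fr + length gs then zs ! (r - fr) else s r)"
    using compl_correct[OF gs zs(1), of fr "fr + length gs"] h by auto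
  have m: "map s1 [fr..<fr + length gs] = zs"
    using s1(2) len by (intro nth_equalityI) auto
  obtain s2 where s2: "exec (comp f [fr..<fr + length gs] out (fr + length gs)) s1 s2"
    "post (fr + length gs) out y s1 s2"
    using CCD[OF f, of s1 "[fr..<fr + length gs]" y "fr + length gs" out] m zs h by auto
  show "\<exists>s'. exec (comp (Cnf f gs) ins out fr) s s' \<and> post fr out y s s'"
    using s1 s2 unfolding post_def by (intro exI[of _ s2]) (auto intro: ex_Seq)
qed

lemma CC_Pr: "CC f \<Longrightarrow> CC g \<Longrightarrow> CC (Prf f g)"
  unfolding CC_def[of "Prf f g"]
proof (intro allI impI)
  fix ins :: "nat list" and out fr y :: nat and s :: "nat \<Rightarrow> nat"
  assume f: "CC f" and g: "CC g"
  assume e: "eval (Prf f g) (map s ins) y" and h: "\<forall>r\<in>set ins. r < fr" "out < fr" "out \<notin> set ins"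
  obtain rn xs where ins: "ins = rn # xs" using e inv_Pr_Nil by (cases ins) auto
  define n where "n = s rn"
  obtain zs where zs: "length zs = Suc n" "zs ! n = y" "eval f (map s xs) (zs ! 0)"
     "\<forall>j<n. eval g (j # zs ! j # map s xs) (zs ! Suc j)"
    using inv_Pr[of f g n "map s xs" y] e ins n_def by auto
  define s1 where "s1 = s(fr+1 := s rn, fr+4 := 0)"
  have e1: "exec (copy rn (fr+1) (fr+4)) s s1" unfolding s1_def by (rule exec_copy) (use h ins in auto)
  define s2 where "s2 = s1(fr := 0)"
  have e2: "exec (clear fr) s1 s2" unfolding s2_def by (rule exec_clear)
  have m2: "map s2 xs = map s xs" using h ins unfolding s2_def s1_def by (intro map_eq_regs) auto
  obtain s3 where s3: "exec (comp f xs (fr+2) (fr+4)) s2 s3" "post (fr+4) (fr+2) (zs ! 0) s2 s3"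
    using CCD[OF f, of s2 xs "zs ! 0" "fr+4" "fr+2"] m2 zs h ins by force
  let ?body = "Seq (comp g (fr # (fr+2) # xs) (fr+3) (fr+4))
              (Seq (copy (fr+3) (fr+2) (fr+4)) (Seq (Inc fr) (Dec (fr+1))))"
  let ?I = "\<lambda>t. \<exists>j\<le>n. t fr = j \<and> t (fr+1) = n - j \<and> t (fr+2) = zs ! j \<and> (\<forall>r<fr. t r = s r)"
  have "\<exists>t'. exec (While (fr+1) ?body) s3 t' \<and> ?I t' \<and> t' (fr+1) = 0"
  proof (rule while_inv[where m = "\<lambda>t. t (fr+1)"])
    fix t assume I: "?I t" and nz: "t (fr+1) \<noteq> 0"
    then obtain j where j: "j < n" "t fr = j" "t (fr+1) = n - j" "t (fr+2) = zs ! j" "\<forall>r<fr. t r = s r"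
      by force
    have mt: "map t (fr # (fr+2) # xs) = j # zs ! j # map s xs"
      using j h ins by auto
    obtain t1 where t1: "exec (comp g (fr # (fr+2) # xs) (fr+3) (fr+4)) t t1" "post (fr+4) (fr+3) (zs ! Suc j) t t1"
      using CCD[OF g, of t "fr # (fr+2) # xs" "zs ! Suc j" "fr+4" "fr+3"] mt zs j h ins by force
    define t2 where "t2 = t1(fr+2 := t1 (fr+3), fr+4 := 0)"
    have e2: "exec (copy (fr+3) (fr+2) (fr+4)) t1 t2" unfolding t2_def by (rule exec_copy) auto
    define t4 where "t4 = t2(fr := Suc (t2 fr), fr+1 := t2 (fr+1) - 1)"
    have e4: "exec (Seq (Inc fr) (Dec (fr+1))) t2 t4" unfolding t4_def
      by (rule ex_Seq, rule ex_Inc, rule exD') auto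
    have "?I t4" using t1(2) j unfolding t4_def t2_def post_def
      by (intro exI[of _ "Suc j"]) auto
    moreover have "t4 (fr+1) < t (fr+1)" using t1(2) j unfolding t4_def t2_def post_def by auto
    ultimately show "\<exists>t'. exec ?body t t' \<and> ?I t' \<and> t' (fr+1) < t (fr+1)"
      using t1(1) e2 e4 by (blast intro: ex_Seq)
  next
    show "?I s3" using s3(2) h unfolding post_def s2_def s1_def n_def
      by (intro exI[of _ 0]) auto
  qed
  then obtain t' where t': "exec (While (fr+1) ?body) s3 t'" "?I t'" "t' (fr+1) = 0" by blast
  then have tz: "t' (fr+2) = y" "\<forall>r<fr. t' r = s r" using zs by auto
  define s' where "s' = t'(out := t' (fr+2), fr+4 := 0)"
  have e5: "exec (copy (fr+2) out (fr+4)) t' s'" unfolding s'_def by (rule exec_copy) (use h in auto)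
  have "exec (comp (Prf f g) ins out fr) s s'"
    using e1 e2 s3(1) t'(1) e5 ins by (auto intro!: ex_Seq)
  moreover have "post fr out y s s'" using tz h unfolding post_def s'_def by auto
  ultimately show "\<exists>s'. exec (comp (Prf f g) ins out fr) s s' \<and> post fr out y s s'" by blast
qed

lemma CC_Mn: "CC f \<Longrightarrow> CC (Mnf f)"
  unfolding CC_def[of "Mnf f"]
proof (intro allI impI)
  fix ins :: "nat list" and out fr y :: nat and s :: "nat \<Rightarrow> nat"
  assume f: "CC f"
  assume e: "eval (Mnf f) (map s ins) y" and h: "\<forall>r\<in>set ins. r < fr" "out < fr" "out \<notin> set ins"
  have e0: "eval f (y # map s ins) 0" and enz: "\<forall>z<y. \<exists>v. v \<noteq> 0 \<and> eval f (z # map s ins) v"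
    using inv_Mn[OF e] by auto
  define val where "val j = (if j = y then 0 else SOME v. v \<noteq> 0 \<and> eval f (j # map s ins) v)" for j
  have val: "j \<le> y \<Longrightarrow> eval f (j # map s ins) (val j) \<and> (val j = 0 \<longleftrightarrow> j = y)" for j
  proof -
    assume "j \<le> y"
    show ?thesis
    proof (cases "j = y")
      case True then show ?thesis using e0 by (simp add: val_def)
    next
      case False
      then have "\<exists>v. v \<noteq> 0 \<and> eval f (j # map s ins) v" using enz `j \<le> y` by auto
      from someI_ex[OF this] show ?thesis using False by (simp add: val_def)
    qed
  qed
  define s1 where "s1 = s(fr := 0)"
  have e1: "exec (clear fr) s s1" unfolding s1_def by (rule exec_clear)
  have m1: "map s1 (fr # ins) = 0 # map s ins" using h unfolding s1_def by auto
  obtain s2 where s2: "exec (comp f (fr # ins) (fr+1) (fr+2)) s1 s2" "post (fr+2) (fr+1) (val 0) s1 s2"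
    using CCD[OF f, of s1 "fr # ins" "val 0" "fr+2" "fr+1"] m1 val[of 0] h by force
  let ?body = "Seq (Inc fr) (comp f (fr # ins) (fr+1) (fr+2))"
  let ?I = "\<lambda>t. \<exists>j\<le>y. t fr = j \<and> t (fr+1) = val j \<and> (\<forall>r<fr. t r = s r)"
  have "\<exists>t'. exec (While (fr+1) ?body) s2 t' \<and> ?I t' \<and> t' (fr+1) = 0"
  proof (rule while_inv[where m = "\<lambda>t. y - t fr"])
    fix t assume I: "?I t" and nz: "t (fr+1) \<noteq> 0"
    then obtain j where j: "j \<le> y" "t fr = j" "t (fr+1) = val j" "\<forall>r<fr. t r = s r"
      by force
    then have jy: "j < y" using val[of j] nz by (cases "j = y") auto
    define t1 where "t1 = t(fr := Suc j)"
    have mt: "map t1 (fr # ins) = Suc j # map s ins"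
      using j h unfolding t1_def by auto
    obtain t2 where t2: "exec (comp f (fr # ins) (fr+1) (fr+2)) t1 t2" "post (fr+2) (fr+1) (val (Suc j)) t1 t2"
      using CCD[OF f, of t1 "fr # ins" "val (Suc j)" "fr+2" "fr+1"] mt val[of "Suc j"] jy h by force
    have ex: "exec ?body t t2" using t2(1) j unfolding t1_def by (auto intro!: ex_Seq exI')
    have "?I t2" using t2(2) j jy unfolding t1_def post_def
      by (intro exI[of _ "Suc j"]) auto
    moreover have "y - t2 fr < y - t fr" using t2(2) j jy unfolding t1_def post_def by auto
    ultimately show "\<exists>t'. exec ?body t t' \<and> ?I t' \<and> y - t' fr < y - t fr"
      using ex by blast
  next
    show "?I s2" using s2(2) h unfolding post_def s1_def
      by (intro exI[of _ 0]) auto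
  qed
  then obtain t' where t': "exec (While (fr+1) ?body) s2 t'" "?I t'" "t' (fr+1) = 0" by blast
    obtain j where j: "j \<le> y" "t' fr = j" "t' (fr+1) = val j" "\<forall>r<fr. t' r = s r"
    using t'(2) by blast
  have tz: "t' fr = y" "\<forall>r<fr. t' r = s r" using j val[OF j(1)] t'(3) by auto
  define s' where "s' = t'(out := t' fr, fr+2 := 0)"
  have e5: "exec (copy fr out (fr+2)) t' s'" unfolding s'_def by (rule exec_copy) (use h in auto)
  have "exec (comp (Mnf f) ins out fr) s s'"
    using e1 s2(1) t'(1) e5 by (auto intro!: ex_Seq)
  moreover have "post fr out y s s'" using tz h unfolding post_def s'_def by auto
  ultimately show "\<exists>s'. exec (comp (Mnf f) ins out fr) s s' \<and> post fr out y s s'" by blast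
qed

lemma CC_all: "CC g"
  by (induction g) (auto intro: CC_Z CC_S CC_Id CC_Cn CC_Pr CC_Mn)


datatype beh = Snd nat nat | Rcv "(nat \<times> nat) list"
type_synonym entry = "nat \<times> beh"

fun trans_of :: "nat \<Rightarrow> beh \<Rightarrow> trans list" where
  "trans_of i (Snd a q) = [(i, Send a, q)]"
| "trans_of i (Rcv l) = map (\<lambda>(a, q). (i, Recv a, q)) l"

definition tt :: "entry list \<Rightarrow> trans list" where
  "tt tbl = concat (map (\<lambda>i. trans_of i (snd (tbl ! i))) [0..<length tbl])"

lemma fst_trans_of: "(x, \<alpha>, y) \<in> set (trans_of i b) \<Longrightarrow> x = i"
  by (cases b) auto

lemma mem_tt: "(q, \<alpha>, q') \<in> set (tt tbl) \<longleftrightarrow> q < length tbl \<and>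
   (case snd (tbl ! q) of Snd a p \<Rightarrow> \<alpha> = Send a \<and> q' = p | Rcv l \<Rightarrow> \<exists>a. \<alpha> = Recv a \<and> (a, q') \<in> set l)"
proof -
  have "(q, \<alpha>, q') \<in> set (tt tbl) \<longleftrightarrow> (\<exists>i<length tbl. (q, \<alpha>, q') \<in> set (trans_of i (snd (tbl ! i))))"
    by (auto simp: tt_def)
  also have "\<dots> \<longleftrightarrow> q < length tbl \<and> (q, \<alpha>, q') \<in> set (trans_of q (snd (tbl ! q)))"
    using fst_trans_of by blast
  also have "\<dots> \<longleftrightarrow> q < length tbl \<and>
   (case snd (tbl ! q) of Snd a p \<Rightarrow> \<alpha> = Send a \<and> q' = p | Rcv l \<Rightarrow> \<exists>a. \<alpha> = Recv a \<and> (a, q') \<in> set l)"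
    by (cases "snd (tbl ! q)") auto
  finally show ?thesis .
qed

definition at :: "entry list \<Rightarrow> nat \<Rightarrow> entry list \<Rightarrow> bool" where
  "at tbl u frag \<longleftrightarrow> u + length frag \<le> length tbl \<and> (\<forall>i<length frag. tbl ! (u + i) = frag ! i)"

lemma at_append: "at tbl u (f1 @ f2) \<Longrightarrow> at tbl u f1 \<and> at tbl (u + length f1) f2"
proof -
  assume h: "at tbl u (f1 @ f2)"
  have "at tbl u f1" unfolding at_def
  proof (intro conjI allI impI)
    show "u + length f1 \<le> length tbl" using h by (auto simp: at_def)
    fix i assume "i < length f1"
    then show "tbl ! (u + i) = f1 ! i" using h unfolding at_def
      by (metis length_append nth_append trans_less_add1)
  qed
  moreover have "at tbl (u + length f1) f2" unfolding at_def
  proof (intro conjI allI impI)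
    show "u + length f1 + length f2 \<le> length tbl" using h by (auto simp: at_def)
    fix i assume "i < length f2"
    then show "tbl ! (u + length f1 + i) = f2 ! i" using h unfolding at_def
      by (metis add.assoc length_append nat_add_left_cancel_less nth_append_length_plus)
  qed
  ultimately show ?thesis ..
qed

lemma at_Cons: "at tbl u (e # f) \<Longrightarrow> u < length tbl \<and> tbl ! u = e \<and> at tbl (Suc u) f"
  unfolding at_def by fastforce

lemma steps_append: "steps D c (t1 @ t2) c'' \<longleftrightarrow> (\<exists>c'. steps D c t1 c' \<and> steps D c' t2 c'')"
  by (induction t1 arbitrary: c) auto

definition reach :: "trans list \<Rightarrow> config \<Rightarrow> config \<Rightarrow> bool" where
  "reach D c c' \<longleftrightarrow> (\<exists>\<tau>. steps D c \<tau> c' \<and> Recv 4 \<notin> set \<tau>)"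

lemma reach_refl: "reach D c c"
  unfolding reach_def by (intro exI[of _ "[]"]) auto

lemma reach_trans: "reach D c c' \<Longrightarrow> reach D c' c'' \<Longrightarrow> reach D c c''"
proof -
  assume "reach D c c'" "reach D c' c''"
  then obtain t1 t2 where "steps D c t1 c'" "Recv 4 \<notin> set t1" "steps D c' t2 c''" "Recv 4 \<notin> set t2"
    unfolding reach_def by blast
  moreover have "steps D c (t1 @ t2) c''" using calculation steps_append by blast
  ultimately show ?thesis unfolding reach_def by (intro exI[of _ "t1 @ t2"]) auto
qed

lemma reach_eq: "reach D c c' \<Longrightarrow> c' = c'' \<Longrightarrow> reach D c c''"
  by simp

lemma reach_snd: "q < length tbl \<Longrightarrow> snd (tbl ! q) = Snd a p \<Longrightarrow> reach (tt tbl) (q, w) (p, w @ [a])"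
  unfolding reach_def
  by (intro exI[of _ "[Send a]"]) (auto simp: mem_tt)

lemma reach_rcv: "q < length tbl \<Longrightarrow> snd (tbl ! q) = Rcv l \<Longrightarrow> (a, p) \<in> set l \<Longrightarrow> a \<noteq> 4 \<Longrightarrow>
   reach (tt tbl) (q, a # w) (p, w)"
  unfolding reach_def
  by (intro exI[of _ "[Recv a]"]) (auto simp: mem_tt)

definition blk :: "nat \<Rightarrow> nat list" where "blk n = replicate n 1 @ [2]"
definition blocks :: "nat list \<Rightarrow> nat list" where "blocks ns = concat (map blk ns)"

definition nxt :: "nat \<Rightarrow> nat \<Rightarrow> nat \<Rightarrow> nat" where "nxt n u tgt = (if n = 0 then tgt else u)"

fun cc :: "nat \<Rightarrow> nat \<Rightarrow> nat \<Rightarrow> nat \<Rightarrow> entry list" where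
  "cc k 0 u tgt = []"
| "cc k (Suc n) u tgt = [(Suc k, Rcv [(1, u+1), (2, u+2)]), (Suc k, Snd 1 u), (k, Snd 2 (nxt n (u+3) tgt))]
     @ cc k n (u+3) tgt"

lemma len_cc[simp]: "length (cc k n u tgt) = 3 * n"
  by (induction n arbitrary: u) auto

lemma at_cc: "at tbl u (cc k (Suc n) u tgt) \<Longrightarrow>
  u + 2 < length tbl \<and> tbl ! u = (Suc k, Rcv [(1, u+1), (2, u+2)]) \<and> tbl ! (u+1) = (Suc k, Snd 1 u) \<and>
  tbl ! (u+2) = (k, Snd 2 (nxt n (u+3) tgt)) \<and> at tbl (u+3) (cc k n (u+3) tgt)"
proof -
  assume h: "at tbl u (cc k (Suc n) u tgt)"
  let ?e = "[(Suc k, Rcv [(1, u+1), (2, u+2)]), (Suc k, Snd 1 u), (k, Snd 2 (nxt n (u+3) tgt))]"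
  have A: "at tbl u (?e @ cc k n (u+3) tgt)" using h by simp
  have h1: "at tbl u ?e" using at_append[OF A] by blast
  have h2: "at tbl (u + length ?e) (cc k n (u+3) tgt)" using at_append[OF A] by blast
  then have h2: "at tbl (u+3) (cc k n (u+3) tgt)" by (simp only: length_Cons list.size(3) numeral_3_eq_3)
  from h1 show ?thesis using h2 by (auto dest!: at_Cons)
qed

lemma cc_block: "at tbl u (cc k (Suc n) u tgt) \<Longrightarrow> reach (tt tbl) (u, blk v @ w) (nxt n (u+3) tgt, w @ blk v)"
proof (induction v arbitrary: w)
  case 0
  note a = at_cc[OF 0]
  have r1: "reach (tt tbl) (u, 2 # w) (u+2, w)"
    by (rule reach_rcv[of u tbl _ 2 "u+2"]) (use a in auto)
  have r2: "reach (tt tbl) (u+2, w) (nxt n (u+3) tgt, w @ [2])"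
    by (rule reach_snd) (use a in auto)
  show ?case using reach_trans[OF r1 r2] by (simp add: blk_def)
next
  case (Suc v)
  note a = at_cc[OF Suc.prems]
  have r1: "reach (tt tbl) (u, 1 # blk v @ w) (u+1, blk v @ w)"
    by (rule reach_rcv[of u tbl _ 1 "u+1"]) (use a in auto)
  have r2: "reach (tt tbl) (u+1, blk v @ w) (u, blk v @ w @ [1])"
    using reach_snd[of "u+1" tbl 1 u "blk v @ w"] a by auto
  have r3: "reach (tt tbl) (u, blk v @ (w @ [1])) (nxt n (u+3) tgt, (w @ [1]) @ blk v)"
    by (rule Suc.IH[OF Suc.prems])
  have "reach (tt tbl) (u, 1 # blk v @ w) (nxt n (u+3) tgt, (w @ [1]) @ blk v)"
    using reach_trans[OF r1 reach_trans[OF r2]] r3 by simp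
  then show ?case by (simp add: blk_def)
qed

lemma cc_run: "at tbl u (cc k n u tgt) \<Longrightarrow> length ns = n \<Longrightarrow>
   reach (tt tbl) (nxt n u tgt, blocks ns @ w) (tgt, w @ blocks ns)"
proof (induction ns arbitrary: n u w)
  case Nil then show ?case by (auto simp: nxt_def blocks_def intro: reach_refl)
next
  case (Cons v ns)
  then obtain n' where n: "n = Suc n'" "length ns = n'" by auto
  have r1: "reach (tt tbl) (u, blk v @ blocks ns @ w) (nxt n' (u+3) tgt, blocks ns @ w @ blk v)"
    using cc_block[of tbl u k n' tgt v "blocks ns @ w"] Cons.prems n by simp
  have r2: "reach (tt tbl) (nxt n' (u+3) tgt, blocks ns @ (w @ blk v)) (tgt, w @ blk v @ blocks ns)"
    using Cons.IH[of "u+3" n' "w @ blk v"] at_cc[of tbl u k n' tgt] Cons.prems n by simp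
  show ?case using reach_trans[OF r1 r2] n by (simp add: nxt_def blocks_def)
qed

lemma cc_W: "at tbl u (cc k (Suc n) u tgt) \<Longrightarrow> reach (tt tbl) (u+1, blk v @ w) (nxt n (u+3) tgt, w @ blk (Suc v))"
proof -
  assume h: "at tbl u (cc k (Suc n) u tgt)"
  note a = at_cc[OF h]
  have r2: "reach (tt tbl) (u+1, blk v @ w) (u, blk v @ w @ [1])"
    using reach_snd[of "u+1" tbl 1 u "blk v @ w"] a by auto
  have r3: "reach (tt tbl) (u, blk v @ (w @ [1])) (nxt n (u+3) tgt, (w @ [1]) @ blk v)"
    by (rule cc_block[OF h])
  have "reach (tt tbl) (u+1, blk v @ w) (nxt n (u+3) tgt, (w @ [1]) @ blk v)"
    using reach_trans[OF r2] r3 by simp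
  then show ?thesis by (simp add: blk_def)
qed

lemma cc_WS: "at tbl u (cc k (Suc n) u tgt) \<Longrightarrow> reach (tt tbl) (u+2, w) (nxt n (u+3) tgt, w @ [2])"
  using at_cc[of tbl u k n tgt] reach_snd[of "u+2" tbl 2 "nxt n (u+3) tgt" w] by auto

definition head :: "nat \<Rightarrow> nat \<Rightarrow> nat \<Rightarrow> entry list" where
  "head k u t = [(Suc k, Rcv [(3, u+1)]), (k, Snd 3 t)]"

lemma at_pass: "at tbl u (head k u t @ cc k r (u+2) b @ e # rest) \<Longrightarrow> b = u+2+3*r \<Longrightarrow>
  at tbl u (head k u t) \<and> at tbl (u+2) (cc k r (u+2) b) \<and> b < length tbl \<and> tbl ! b = e \<and> at tbl (Suc b) rest"
proof -
  assume h: "at tbl u (head k u t @ cc k r (u+2) b @ e # rest)" and b: "b = u+2+3*r"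
  have l: "length (head k u t) = 2" by (simp add: head_def)
  from at_append[OF h] l have h1: "at tbl u (head k u t)" and h2: "at tbl (u+2) (cc k r (u+2) b @ e # rest)"
    by auto
  from at_append[OF h2] b have h3: "at tbl (u+2) (cc k r (u+2) b)" and h4: "at tbl b (e # rest)"
    by auto
  show ?thesis using h1 h3 at_Cons[OF h4] by auto
qed

lemma pass_pre: "at tbl u (head k u (nxt r (u+2) b)) \<Longrightarrow> at tbl (u+2) (cc k r (u+2) b) \<Longrightarrow> length ns = r \<Longrightarrow>
  reach (tt tbl) (u, 3 # blocks ns @ w) (b, w @ [3] @ blocks ns)"
proof -
  assume h1: "at tbl u (head k u (nxt r (u+2) b))" and h2: "at tbl (u+2) (cc k r (u+2) b)" and l: "length ns = r"
  have a: "u < length tbl" "tbl ! u = (Suc k, Rcv [(3, u+1)])" "u+1 < length tbl" "tbl ! (u+1) = (k, Snd 3 (nxt r (u+2) b))"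
    using h1 by (auto simp: head_def dest!: at_Cons)
  have r1: "reach (tt tbl) (u, 3 # blocks ns @ w) (u+1, blocks ns @ w)"
    by (rule reach_rcv[of u tbl _ 3 "u+1"]) (use a in auto)
  have r2: "reach (tt tbl) (u+1, blocks ns @ w) (nxt r (u+2) b, blocks ns @ w @ [3])"
    using reach_snd[of "u+1" tbl 3 "nxt r (u+2) b" "blocks ns @ w"] a by auto
  have r3: "reach (tt tbl) (nxt r (u+2) b, blocks ns @ (w @ [3])) (b, (w @ [3]) @ blocks ns)"
    by (rule cc_run[OF h2 l])
  show ?thesis using reach_trans[OF r1 reach_trans[OF r2 r3]] by simp
qed

definition qenc :: "nat \<Rightarrow> (nat \<Rightarrow> nat) \<Rightarrow> nat list" where
  "qenc k s = 3 # blocks (map s [0..<k])"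

lemma blocks_append[simp]: "blocks (xs @ ys) = blocks xs @ blocks ys"
  by (simp add: blocks_def)
lemma blocks_Cons[simp]: "blocks (x # ys) = blk x @ blocks ys"
  by (simp add: blocks_def)
lemma blocks_Nil[simp]: "blocks [] = []"
  by (simp add: blocks_def)

lemma qenc_split: "r < k \<Longrightarrow> qenc k s = 3 # blocks (map s [0..<r]) @ blk (s r) @ blocks (map s [Suc r..<k])"
proof -
  assume "r < k"
  then have "[0..<k] = [0..<r] @ [r..<k]" using upt_add_eq_append[of 0 r "k-r"] by simp
  also have "[r..<k] = r # [Suc r..<k]" using `r < k` by (simp add: upt_conv_Cons)
  finally have "[0..<k] = [0..<r] @ r # [Suc r..<k]" .
  then show ?thesis by (simp add: qenc_def)
qed

lemma map_upd_lo: "map (s(r := v)) [0..<r] = map s [0..<r]" by auto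
lemma map_upd_hi: "map (s(r := v)) [Suc r..<k] = map s [Suc r..<k]" by auto

definition pincb :: "nat \<Rightarrow> nat \<Rightarrow> nat \<Rightarrow> nat \<Rightarrow> nat \<Rightarrow> entry list" where
  "pincb k r u b x = head k u (nxt r (u+2) b) @ cc k r (u+2) b @
     (Suc k, Snd 1 (Suc b)) # cc k (k-r) (Suc b) x"

definition pdecb :: "nat \<Rightarrow> nat \<Rightarrow> nat \<Rightarrow> nat \<Rightarrow> nat \<Rightarrow> entry list" where
  "pdecb k r u b x = head k u (nxt r (u+2) b) @ cc k r (u+2) b @
     (Suc k, Rcv [(1, Suc b), (2, Suc b + 2)]) # cc k (k-r) (Suc b) x"

definition ptestb :: "nat \<Rightarrow> nat \<Rightarrow> nat \<Rightarrow> nat \<Rightarrow> nat \<Rightarrow> nat \<Rightarrow> entry list" where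
  "ptestb k r u b xz xn = head k u (nxt r (u+2) b) @ cc k r (u+2) b @
     (Suc k, Rcv [(1, Suc b + 3*(k-r) + 1), (2, Suc b + 2)]) # cc k (k-r) (Suc b) xz @ cc k (k-r) (Suc b + 3*(k-r)) xn"

definition "pinc k r u x = pincb k r u (u+2+3*r) x"
definition "pdec k r u x = pdecb k r u (u+2+3*r) x"
definition "ptest k r u xz xn = ptestb k r u (u+2+3*r) xz xn"

lemma len_pinc[simp]: "r < k \<Longrightarrow> length (pinc k r u x) = 3 * k + 3"
  by (simp add: pinc_def pincb_def head_def)
lemma len_pdec[simp]: "r < k \<Longrightarrow> length (pdec k r u x) = 3 * k + 3"
  by (simp add: pdec_def pdecb_def head_def)
lemma len_ptest[simp]: "length (ptest k r u xz xn) = 3 + 3 * r + 6 * (k - r)"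
  by (simp add: ptest_def ptestb_def head_def)

lemma qenc_split2: "r < k \<Longrightarrow> qenc k (s(r := v)) = 3 # blocks (map s [0..<r]) @ blk v @ blocks (map s [Suc r..<k])"
  using qenc_split[of r k "s(r := v)"] by (simp add: map_upd_lo map_upd_hi)

lemma blk_Suc: "blk (Suc v) = 1 # blk v" by (simp add: blk_def)
lemma blk_0: "blk 0 = [2]" by (simp add: blk_def)

lemma run_incb: "at tbl u (pincb k r u b x) \<Longrightarrow> b = u+2+3*r \<Longrightarrow> r < k \<Longrightarrow> reach (tt tbl) (u, qenc k s) (x, qenc k (s(r := Suc (s r))))"
proof -
  assume h: "at tbl u (pincb k r u b x)" and bb: "b = u+2+3*r" and rk: "r < k"
  note a = at_pass[OF h[unfolded pincb_def] bb]
  define B1 where "B1 = blocks (map s [0..<r])"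
  define B2 where "B2 = blocks (map s [Suc r..<k])"
  define v where "v = s r"
  have r1: "reach (tt tbl) (u, 3 # B1 @ blk v @ B2) (b, blk v @ B2 @ 3 # B1)"
    using pass_pre[of tbl u k r b "map s [0..<r]" "blk v @ B2"] a unfolding B1_def by simp
  have r2: "reach (tt tbl) (b, blk v @ B2 @ 3 # B1) (Suc b, blk v @ B2 @ 3 # B1 @ [1])"
    using reach_snd[of b tbl 1 "Suc b" "blk v @ B2 @ 3 # B1"] a by simp
  have r3: "reach (tt tbl) (Suc b, blk v @ B2 @ 3 # B1 @ [1]) (x, 3 # B1 @ 1 # blk v @ B2)"
    using cc_run[of tbl "Suc b" k "k-r" x "v # map s [Suc r..<k]" "3 # B1 @ [1]"] a rk
    unfolding B2_def by (simp add: nxt_def)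
  have "reach (tt tbl) (u, 3 # B1 @ blk v @ B2) (x, 3 # B1 @ 1 # blk v @ B2)"
    using reach_trans[OF r1 reach_trans[OF r2 r3]] .
  then show ?thesis using qenc_split[OF rk, of s] qenc_split2[OF rk, of s "Suc (s r)"]
    unfolding B1_def B2_def v_def by (simp add: blk_Suc)
qed

lemma run_decb: "at tbl u (pdecb k r u b x) \<Longrightarrow> b = u+2+3*r \<Longrightarrow> r < k \<Longrightarrow> reach (tt tbl) (u, qenc k s) (x, qenc k (s(r := s r - 1)))"
proof -
  assume h: "at tbl u (pdecb k r u b x)" and bb: "b = u+2+3*r" and rk: "r < k"
  note a = at_pass[OF h[unfolded pdecb_def] bb]
  define B1 where "B1 = blocks (map s [0..<r])"
  define B2 where "B2 = blocks (map s [Suc r..<k])"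
  define v where "v = s r"
  have r1: "reach (tt tbl) (u, 3 # B1 @ blk v @ B2) (b, blk v @ B2 @ 3 # B1)"
    using pass_pre[of tbl u k r b "map s [0..<r]" "blk v @ B2"] a unfolding B1_def by simp
  have kr: "k - r = Suc (k - Suc r)" using rk by simp
  have ac: "at tbl (Suc b) (cc k (Suc (k - Suc r)) (Suc b) x)" using a kr by simp
  show ?thesis
  proof (cases v)
    case 0
    have r2: "reach (tt tbl) (b, blk v @ B2 @ 3 # B1) (Suc b + 2, B2 @ 3 # B1)"
      using reach_rcv[of b tbl _ 2 "Suc b + 2" "B2 @ 3 # B1"] a 0 by (simp add: blk_0)
    have r3: "reach (tt tbl) (Suc b + 2, B2 @ 3 # B1) (nxt (k - Suc r) (Suc b + 3) x, B2 @ 3 # B1 @ [2])"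
      using cc_WS[OF ac, of "B2 @ 3 # B1"] by simp
    have r4: "reach (tt tbl) (nxt (k - Suc r) (Suc b + 3) x, B2 @ 3 # B1 @ [2]) (x, 3 # B1 @ 2 # B2)"
      using cc_run[of tbl "Suc b + 3" k "k - Suc r" x "map s [Suc r..<k]" "3 # B1 @ [2]"] at_cc[OF ac]
      unfolding B2_def by simp
    have "reach (tt tbl) (u, 3 # B1 @ blk v @ B2) (x, 3 # B1 @ 2 # B2)"
      using reach_trans[OF r1 reach_trans[OF r2 reach_trans[OF r3 r4]]] .
    then show ?thesis using qenc_split[OF rk, of s] qenc_split2[OF rk, of s "s r - 1"] 0
      unfolding B1_def B2_def v_def by (simp add: blk_0)
  next
    case (Suc w)
    have r2: "reach (tt tbl) (b, blk v @ B2 @ 3 # B1) (Suc b, blk w @ B2 @ 3 # B1)"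
      using reach_rcv[of b tbl _ 1 "Suc b" "blk w @ B2 @ 3 # B1"] a Suc by (simp add: blk_Suc)
    have r3: "reach (tt tbl) (Suc b, blk w @ B2 @ 3 # B1) (x, 3 # B1 @ blk w @ B2)"
      using cc_run[of tbl "Suc b" k "k-r" x "w # map s [Suc r..<k]" "3 # B1"] a rk
      unfolding B2_def by (simp add: nxt_def)
    have "reach (tt tbl) (u, 3 # B1 @ blk v @ B2) (x, 3 # B1 @ blk w @ B2)"
      using reach_trans[OF r1 reach_trans[OF r2 r3]] .
    then show ?thesis using qenc_split[OF rk, of s] qenc_split2[OF rk, of s "s r - 1"] Suc
      unfolding B1_def B2_def v_def by simp
  qed
qed

lemma run_testb: "at tbl u (ptestb k r u b xz xn) \<Longrightarrow> b = u+2+3*r \<Longrightarrow> r < k \<Longrightarrow>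
   reach (tt tbl) (u, qenc k s) (if s r = 0 then xz else xn, qenc k s)"
proof -
  assume h: "at tbl u (ptestb k r u b xz xn)" and bb: "b = u+2+3*r" and rk: "r < k"
  note a = at_pass[OF h[unfolded ptestb_def] bb]
  define B1 where "B1 = blocks (map s [0..<r])"
  define B2 where "B2 = blocks (map s [Suc r..<k])"
  define v where "v = s r"
  have r1: "reach (tt tbl) (u, 3 # B1 @ blk v @ B2) (b, blk v @ B2 @ 3 # B1)"
    using pass_pre[of tbl u k r b "map s [0..<r]" "blk v @ B2"] a unfolding B1_def by simp
  have kr: "k - r = Suc (k - Suc r)" using rk by simp
  have a2: "at tbl (Suc b) (cc k (k-r) (Suc b) xz)" "at tbl (Suc b + 3*(k-r)) (cc k (k-r) (Suc b + 3*(k-r)) xn)"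
    using at_append[of tbl "Suc b" "cc k (k-r) (Suc b) xz"] a by auto
  have acz: "at tbl (Suc b) (cc k (Suc (k - Suc r)) (Suc b) xz)" using a2 kr by simp
  have acn: "at tbl (Suc b + 3*(k-r)) (cc k (Suc (k - Suc r)) (Suc b + 3*(k-r)) xn)" using a2 kr by simp
  have q: "qenc k s = 3 # B1 @ blk v @ B2" using qenc_split[OF rk, of s] unfolding B1_def B2_def v_def .
  show ?thesis
  proof (cases v)
    case 0
    have r2: "reach (tt tbl) (b, blk v @ B2 @ 3 # B1) (Suc b + 2, B2 @ 3 # B1)"
      using reach_rcv[of b tbl _ 2 "Suc b + 2" "B2 @ 3 # B1"] a 0 by (simp add: blk_0)
    have r3: "reach (tt tbl) (Suc b + 2, B2 @ 3 # B1) (nxt (k - Suc r) (Suc b + 3) xz, B2 @ 3 # B1 @ [2])"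
      using cc_WS[OF acz, of "B2 @ 3 # B1"] by simp
    have r4: "reach (tt tbl) (nxt (k - Suc r) (Suc b + 3) xz, B2 @ 3 # B1 @ [2]) (xz, 3 # B1 @ 2 # B2)"
      using cc_run[of tbl "Suc b + 3" k "k - Suc r" xz "map s [Suc r..<k]" "3 # B1 @ [2]"] at_cc[OF acz]
      unfolding B2_def by simp
    have "reach (tt tbl) (u, 3 # B1 @ blk v @ B2) (xz, 3 # B1 @ 2 # B2)"
      using reach_trans[OF r1 reach_trans[OF r2 reach_trans[OF r3 r4]]] .
    then show ?thesis using q 0 unfolding v_def by (simp add: blk_0)
  next
    case (Suc w)
    have r2: "reach (tt tbl) (b, blk v @ B2 @ 3 # B1) (Suc b + 3*(k-r) + 1, blk w @ B2 @ 3 # B1)"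
      using reach_rcv[of b tbl _ 1 "Suc b + 3*(k-r) + 1" "blk w @ B2 @ 3 # B1"] a Suc by (simp add: blk_Suc)
    have r3: "reach (tt tbl) (Suc b + 3*(k-r) + 1, blk w @ B2 @ 3 # B1) (nxt (k - Suc r) (Suc b + 3*(k-r) + 3) xn, B2 @ 3 # B1 @ blk v)"
      using cc_W[OF acn, of w "B2 @ 3 # B1"] Suc by simp
    have r4: "reach (tt tbl) (nxt (k - Suc r) (Suc b + 3*(k-r) + 3) xn, B2 @ 3 # B1 @ blk v) (xn, 3 # B1 @ blk v @ B2)"
      using cc_run[of tbl "Suc b + 3*(k-r) + 3" k "k - Suc r" xn "map s [Suc r..<k]" "3 # B1 @ blk v"] at_cc[OF acn]
      unfolding B2_def by simp
    have "reach (tt tbl) (u, 3 # B1 @ blk v @ B2) (xn, 3 # B1 @ blk v @ B2)"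
      using reach_trans[OF r1 reach_trans[OF r2 reach_trans[OF r3 r4]]] .
    then show ?thesis using q Suc unfolding v_def by simp
  qed
qed

lemma run_inc: "at tbl u (pinc k r u x) \<Longrightarrow> r < k \<Longrightarrow> reach (tt tbl) (u, qenc k s) (x, qenc k (s(r := Suc (s r))))"
  unfolding pinc_def using run_incb by blast
lemma run_dec: "at tbl u (pdec k r u x) \<Longrightarrow> r < k \<Longrightarrow> reach (tt tbl) (u, qenc k s) (x, qenc k (s(r := s r - 1)))"
  unfolding pdec_def using run_decb by blast
lemma run_test: "at tbl u (ptest k r u xz xn) \<Longrightarrow> r < k \<Longrightarrow>
   reach (tt tbl) (u, qenc k s) (if s r = 0 then xz else xn, qenc k s)"
  unfolding ptest_def using run_testb by blast


fun lenc :: "nat \<Rightarrow> cmd \<Rightarrow> nat" where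
  "lenc k Skip = 0"
| "lenc k (Inc r) = 3 * k + 3"
| "lenc k (Dec r) = 3 * k + 3"
| "lenc k (Seq c1 c2) = lenc k c1 + lenc k c2"
| "lenc k (While r c) = 3 + 3 * r + 6 * (k - r) + lenc k c"

fun entc :: "nat \<Rightarrow> cmd \<Rightarrow> nat \<Rightarrow> nat \<Rightarrow> nat" where
  "entc k Skip u x = x"
| "entc k (Inc r) u x = u"
| "entc k (Dec r) u x = u"
| "entc k (Seq c1 c2) u x = entc k c1 u (entc k c2 (u + lenc k c1) x)"
| "entc k (While r c) u x = u"

fun compc :: "nat \<Rightarrow> cmd \<Rightarrow> nat \<Rightarrow> nat \<Rightarrow> entry list" where
  "compc k Skip u x = []"
| "compc k (Inc r) u x = pinc k r u x"
| "compc k (Dec r) u x = pdec k r u x"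
| "compc k (Seq c1 c2) u x = compc k c1 u (entc k c2 (u + lenc k c1) x) @ compc k c2 (u + lenc k c1) x"
| "compc k (While r c) u x = ptest k r u x (entc k c (u + (3 + 3 * r + 6 * (k - r))) u)
     @ compc k c (u + (3 + 3 * r + 6 * (k - r))) u"

fun rok :: "nat \<Rightarrow> cmd \<Rightarrow> bool" where
  "rok k Skip = True"
| "rok k (Inc r) = (r < k)"
| "rok k (Dec r) = (r < k)"
| "rok k (Seq c1 c2) = (rok k c1 \<and> rok k c2)"
| "rok k (While r c) = (r < k \<and> rok k c)"

lemma len_compc: "rok k c \<Longrightarrow> length (compc k c u x) = lenc k c"
  by (induction c arbitrary: u x) auto

lemma sim: "exec c s s' \<Longrightarrow> rok k c \<Longrightarrow> at tbl u (compc k c u x) \<Longrightarrow>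
   reach (tt tbl) (entc k c u x, qenc k s) (x, qenc k s')"
proof (induction arbitrary: u x rule: exec.induct)
  case (ex_Skip s) then show ?case by (auto intro: reach_refl)
next
  case (ex_Inc r s) then show ?case using run_inc[of tbl u k r x s] unfolding fun_upd_def by simp
next
  case (ex_Dec r s) then show ?case using run_dec[of tbl u k r x s] unfolding fun_upd_def by simp
next
  case (ex_Seq c1 s s1 c2 s2)
  have a: "at tbl u (compc k c1 u (entc k c2 (u + lenc k c1) x))" "at tbl (u + lenc k c1) (compc k c2 (u + lenc k c1) x)"
    using at_append[of tbl u "compc k c1 u (entc k c2 (u + lenc k c1) x)" "compc k c2 (u + lenc k c1) x"]
      ex_Seq.prems len_compc[of k c1 u "entc k c2 (u + lenc k c1) x"] by auto
  show ?case using reach_trans[OF ex_Seq.IH(1)[OF _ a(1)] ex_Seq.IH(2)[OF _ a(2)]] ex_Seq.prems by auto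
next
  case (ex_W0 s r c)
  have "at tbl u (ptest k r u x (entc k c (u + (3 + 3 * r + 6 * (k - r))) u))"
    using at_append[of tbl u] ex_W0.prems by auto
  then show ?case using run_test[of tbl u k r x _ s] ex_W0 by auto
next
  case (ex_W1 s r c s1 s2)
  let ?L = "3 + 3 * r + 6 * (k - r)"
  have a: "at tbl u (ptest k r u x (entc k c (u + ?L) u))" "at tbl (u + ?L) (compc k c (u + ?L) u)"
    using at_append[of tbl u "ptest k r u x (entc k c (u + ?L) u)"] ex_W1.prems by auto
  have r1: "reach (tt tbl) (u, qenc k s) (entc k c (u + ?L) u, qenc k s)"
    using run_test[OF a(1), of s] ex_W1 by auto
  have r2: "reach (tt tbl) (entc k c (u + ?L) u, qenc k s) (u, qenc k s1)"
    using ex_W1.IH(1)[OF _ a(2)] ex_W1.prems by auto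
  have r3: "reach (tt tbl) (u, qenc k s1) (x, qenc k s2)"
    using ex_W1.IH(2)[of u x] ex_W1.prems by auto
  show ?case using reach_trans[OF r1 reach_trans[OF r2 r3]] by simp
qed


definition mk :: "nat \<Rightarrow> nat" where "mk a = (if a = 2 \<or> a = 3 then 1 else 0)"

definition wfe :: "entry list \<Rightarrow> nat \<Rightarrow> bool" where
  "wfe tbl i \<longleftrightarrow> 1 \<le> fst (tbl ! i) \<and> (case snd (tbl ! i) of
      Snd a q \<Rightarrow> q < length tbl \<and> fst (tbl ! q) = fst (tbl ! i) + mk a
    | Rcv l \<Rightarrow> distinct (map fst l) \<and> (\<forall>(a, q)\<in>set l. q < length tbl \<and> fst (tbl ! q) + mk a = fst (tbl ! i)))"

definition wff :: "entry list \<Rightarrow> nat \<Rightarrow> entry list \<Rightarrow> bool" where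
  "wff tbl u f \<longleftrightarrow> (\<forall>i<length f. wfe tbl (u + i))"

lemma wff_Nil[simp]: "wff tbl u []" by (simp add: wff_def)

lemma wff_append: "wff tbl u f1 \<Longrightarrow> wff tbl (u + length f1) f2 \<Longrightarrow> wff tbl u (f1 @ f2)"
  unfolding wff_def
proof (intro allI impI)
  fix i assume h1: "\<forall>i<length f1. wfe tbl (u + i)" and h2: "\<forall>i<length f2. wfe tbl (u + length f1 + i)"
    and i: "i < length (f1 @ f2)"
  show "wfe tbl (u + i)"
  proof (cases "i < length f1")
    case True then show ?thesis using h1 by auto
  next
    case False
    then have "u + i = u + length f1 + (i - length f1)" by simp
    then show ?thesis using h2 i False by (metis add_diff_inverse_nat length_append nat_add_left_cancel_less)
  qed
qed

lemma wff_Cons: "wfe tbl u \<Longrightarrow> wff tbl (Suc u) f \<Longrightarrow> wff tbl u (e # f)"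
  unfolding wff_def
proof (intro allI impI)
  fix i assume h1: "wfe tbl u" and h2: "\<forall>i<length f. wfe tbl (Suc u + i)" and i: "i < length (e # f)"
  show "wfe tbl (u + i)" using h1 h2 i by (cases i) auto
qed

lemma wfe_snd: "tbl ! q0 = (p, Snd a q) \<Longrightarrow> 1 \<le> p \<Longrightarrow> q < length tbl \<Longrightarrow> fst (tbl ! q) = p + mk a \<Longrightarrow> wfe tbl q0"
  by (simp add: wfe_def)

lemma wfe_rcv: "tbl ! q0 = (p, Rcv l) \<Longrightarrow> 1 \<le> p \<Longrightarrow> distinct (map fst l) \<Longrightarrow>
   (\<forall>(a, q)\<in>set l. q < length tbl \<and> fst (tbl ! q) + mk a = p) \<Longrightarrow> wfe tbl q0"
  by (simp add: wfe_def)

lemma wf_cc: "at tbl u (cc k n u tgt) \<Longrightarrow> 1 \<le> k \<Longrightarrow> (0 < n \<longrightarrow> tgt < length tbl \<and> fst (tbl ! tgt) = Suc k) \<Longrightarrow>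
   wff tbl u (cc k n u tgt) \<and> (0 < n \<longrightarrow> nxt n u tgt < length tbl \<and> fst (tbl ! nxt n u tgt) = Suc k)"
proof (induction n arbitrary: u)
  case 0 then show ?case by simp
next
  case (Suc n)
  note a = at_cc[OF Suc.prems(1)]
  have ih: "wff tbl (u+3) (cc k n (u+3) tgt) \<and> (0 < n \<longrightarrow> nxt n (u+3) tgt < length tbl \<and> fst (tbl ! nxt n (u+3) tgt) = Suc k)"
    using Suc.IH[of "u+3"] a Suc.prems by auto
  have nx: "nxt n (u+3) tgt < length tbl \<and> fst (tbl ! nxt n (u+3) tgt) = Suc k"
    using ih Suc.prems by (cases n) (auto simp: nxt_def)
  have w0: "wfe tbl u" by (rule wfe_rcv[of _ _ "Suc k"]) (use a in \<open>auto simp: mk_def\<close>)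
  have w1: "wfe tbl (Suc u)" by (rule wfe_snd[of _ _ "Suc k" 1 u]) (use a in \<open>auto simp: mk_def\<close>)
  have w2: "wfe tbl (Suc (Suc u))" by (rule wfe_snd[of _ _ k 2 "nxt n (u+3) tgt"]) (use a nx Suc.prems in \<open>auto simp: mk_def\<close>)
  have "wff tbl u (cc k (Suc n) u tgt)"
    using w0 w1 w2 ih by (auto intro!: wff_Cons simp: numeral_3_eq_3)
  then show ?case using a by (simp add: nxt_def)
qed

lemma wf_pre: "at tbl u (head k u (nxt r (u+2) b) @ cc k r (u+2) b @ e # rest) \<Longrightarrow> b = u+2+3*r \<Longrightarrow> 1 \<le> k \<Longrightarrow>
   fst e = Suc k \<Longrightarrow> wff tbl u (head k u (nxt r (u+2) b) @ cc k r (u+2) b) \<and> u < length tbl \<and> fst (tbl ! u) = Suc k"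
proof -
  assume h: "at tbl u (head k u (nxt r (u+2) b) @ cc k r (u+2) b @ e # rest)" and bb: "b = u+2+3*r"
    and k: "1 \<le> k" and e: "fst e = Suc k"
  note a = at_pass[OF h bb]
  have hd: "u < length tbl" "tbl ! u = (Suc k, Rcv [(3, u+1)])" "u+1 < length tbl" "tbl ! (u+1) = (k, Snd 3 (nxt r (u+2) b))"
    using a by (auto simp: head_def dest!: at_Cons)
  have c: "wff tbl (u+2) (cc k r (u+2) b) \<and> (0 < r \<longrightarrow> nxt r (u+2) b < length tbl \<and> fst (tbl ! nxt r (u+2) b) = Suc k)"
    by (rule wf_cc) (use a e k in auto)
  have t: "nxt r (u+2) b < length tbl \<and> fst (tbl ! nxt r (u+2) b) = Suc k"
    using c a e by (cases r) (auto simp: nxt_def)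
  have w0: "wfe tbl u" by (rule wfe_rcv[OF hd(2)]) (use hd in \<open>auto simp: mk_def\<close>)
  have w1: "wfe tbl (u+1)" by (rule wfe_snd[OF hd(4)]) (use k t in \<open>auto simp: mk_def\<close>)
  have hw: "wff tbl u (head k u (nxt r (u+2) b))" unfolding head_def
    by (rule wff_Cons[OF w0], rule wff_Cons) (use w1 in simp_all)
  have l: "u + length (head k u (nxt r (u+2) b)) = u + 2" by (simp add: head_def)
  have "wff tbl (u + length (head k u (nxt r (u+2) b))) (cc k r (u+2) b)" unfolding l using c by blast
  then have "wff tbl u (head k u (nxt r (u+2) b) @ cc k r (u+2) b)" by (rule wff_append[OF hw])
  then show ?thesis using hd by simp
qed

lemma wf_cc_ent: "at tbl u (cc k (Suc n) u tgt) \<Longrightarrow> fst (tbl ! u) = Suc k \<and> fst (tbl ! (u+1)) = Suc k \<and> fst (tbl ! (u+2)) = k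
   \<and> u + 2 < length tbl"
proof -
  assume "at tbl u (cc k (Suc n) u tgt)"
  from at_cc[OF this] show ?thesis by simp
qed

lemma wf_pass_gen:
  assumes h: "at tbl u (head k u (nxt r (u+2) b) @ cc k r (u+2) b @ e # rest)" and bb: "b = u+2+3*r" and k: "1 \<le> k"
    and e: "fst e = Suc k" and we: "wfe tbl b" and wr: "wff tbl (Suc b) rest"
  shows "wff tbl u (head k u (nxt r (u+2) b) @ cc k r (u+2) b @ e # rest) \<and> u < length tbl \<and> fst (tbl ! u) = Suc k"
proof -
  note p = wf_pre[OF h bb k e]
  have l: "u + length (head k u (nxt r (u+2) b) @ cc k r (u+2) b) = b" using bb by (simp add: head_def)
  have "wff tbl b (e # rest)" by (rule wff_Cons[OF we wr])
  then have "wff tbl (u + length (head k u (nxt r (u+2) b) @ cc k r (u+2) b)) (e # rest)"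
    by (simp only: l)
  then show ?thesis using p wff_append[of tbl u "head k u (nxt r (u+2) b) @ cc k r (u+2) b" "e # rest"] by simp
qed

lemma wf_pinc: "at tbl u (pinc k r u x) \<Longrightarrow> r < k \<Longrightarrow> 1 \<le> k \<Longrightarrow> x < length tbl \<Longrightarrow> fst (tbl ! x) = Suc k \<Longrightarrow>
   wff tbl u (pinc k r u x) \<and> u < length tbl \<and> fst (tbl ! u) = Suc k"
proof -
  assume h0: "at tbl u (pinc k r u x)" and rk: "r < k" and k: "1 \<le> k" and x: "x < length tbl" "fst (tbl ! x) = Suc k"
  define b where "b = u+2+3*r"
  have h: "at tbl u (pincb k r u b x)" using h0 by (simp add: pinc_def b_def)
  note a = at_pass[OF h[unfolded pincb_def] b_def]
  have kr: "k - r = Suc (k - Suc r)" using rk by simp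
  have ac: "at tbl (Suc b) (cc k (Suc (k - Suc r)) (Suc b) x)" using a kr by simp
  note ce = wf_cc_ent[OF ac]
  have wr: "wff tbl (Suc b) (cc k (k - r) (Suc b) x)" using wf_cc[of tbl "Suc b" k "k-r" x] a k x by auto
  have we: "wfe tbl b" by (rule wfe_snd[of _ _ "Suc k" 1 "Suc b"]) (use a ce in \<open>auto simp: mk_def\<close>)
  show ?thesis using wf_pass_gen[OF h[unfolded pincb_def] b_def k _ we wr] by (simp add: pinc_def pincb_def b_def)
qed

lemma wf_pdec: "at tbl u (pdec k r u x) \<Longrightarrow> r < k \<Longrightarrow> 1 \<le> k \<Longrightarrow> x < length tbl \<Longrightarrow> fst (tbl ! x) = Suc k \<Longrightarrow>
   wff tbl u (pdec k r u x) \<and> u < length tbl \<and> fst (tbl ! u) = Suc k"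
proof -
  assume h0: "at tbl u (pdec k r u x)" and rk: "r < k" and k: "1 \<le> k" and x: "x < length tbl" "fst (tbl ! x) = Suc k"
  define b where "b = u+2+3*r"
  have h: "at tbl u (pdecb k r u b x)" using h0 by (simp add: pdec_def b_def)
  note a = at_pass[OF h[unfolded pdecb_def] b_def]
  have kr: "k - r = Suc (k - Suc r)" using rk by simp
  have ac: "at tbl (Suc b) (cc k (Suc (k - Suc r)) (Suc b) x)" using a kr by simp
  note ce = wf_cc_ent[OF ac]
  have wr: "wff tbl (Suc b) (cc k (k - r) (Suc b) x)" using wf_cc[of tbl "Suc b" k "k-r" x] a k x by auto
  have we: "wfe tbl b" by (rule wfe_rcv[of _ _ "Suc k"]) (use a ce in \<open>auto simp: mk_def\<close>)
  show ?thesis using wf_pass_gen[OF h[unfolded pdecb_def] b_def k _ we wr] by (simp add: pdec_def pdecb_def b_def)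
qed

lemma wf_ptest: "at tbl u (ptest k r u xz xn) \<Longrightarrow> r < k \<Longrightarrow> 1 \<le> k \<Longrightarrow> xz < length tbl \<Longrightarrow> fst (tbl ! xz) = Suc k \<Longrightarrow>
   xn < length tbl \<Longrightarrow> fst (tbl ! xn) = Suc k \<Longrightarrow>
   wff tbl u (ptest k r u xz xn) \<and> u < length tbl \<and> fst (tbl ! u) = Suc k"
proof -
  assume h0: "at tbl u (ptest k r u xz xn)" and rk: "r < k" and k: "1 \<le> k" and x: "xz < length tbl" "fst (tbl ! xz) = Suc k"
     "xn < length tbl" "fst (tbl ! xn) = Suc k"
  define b where "b = u+2+3*r"
  have h: "at tbl u (ptestb k r u b xz xn)" using h0 by (simp add: ptest_def b_def)
  note a = at_pass[OF h[unfolded ptestb_def] b_def]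
  have kr: "k - r = Suc (k - Suc r)" using rk by simp
  have a2: "at tbl (Suc b) (cc k (k-r) (Suc b) xz)" "at tbl (Suc b + 3*(k-r)) (cc k (k-r) (Suc b + 3*(k-r)) xn)"
    using at_append[of tbl "Suc b" "cc k (k-r) (Suc b) xz"] a by auto
  have acz: "at tbl (Suc b) (cc k (Suc (k - Suc r)) (Suc b) xz)" using a2 kr by simp
  have acn: "at tbl (Suc b + 3*(k-r)) (cc k (Suc (k - Suc r)) (Suc b + 3*(k-r)) xn)" using a2 kr by simp
  note cz = wf_cc_ent[OF acz] and cn = wf_cc_ent[OF acn]
  have wr1: "wff tbl (Suc b) (cc k (k - r) (Suc b) xz)" using wf_cc[OF a2(1)] k x by auto
  have wr2: "wff tbl (Suc b + 3*(k-r)) (cc k (k - r) (Suc b + 3*(k-r)) xn)" using wf_cc[OF a2(2)] k x by auto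
  have wr: "wff tbl (Suc b) (cc k (k - r) (Suc b) xz @ cc k (k - r) (Suc b + 3*(k-r)) xn)"
    using wff_append[OF wr1] wr2 by simp
  have we: "wfe tbl b" by (rule wfe_rcv[of _ _ "Suc k"]) (use a cz cn in \<open>auto simp: mk_def\<close>)
  show ?thesis using wf_pass_gen[OF h[unfolded ptestb_def] b_def k _ we wr] by (simp add: ptest_def ptestb_def b_def)
qed

lemma wf_compc: "rok k c \<Longrightarrow> 1 \<le> k \<Longrightarrow> at tbl u (compc k c u x) \<Longrightarrow> x < length tbl \<Longrightarrow> fst (tbl ! x) = Suc k \<Longrightarrow>
   wff tbl u (compc k c u x) \<and> entc k c u x < length tbl \<and> fst (tbl ! entc k c u x) = Suc k"
proof (induction c arbitrary: u x)
  case Skip then show ?case by simp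
next
  case (Inc r) then show ?case using wf_pinc[of tbl u k r x] by simp
next
  case (Dec r) then show ?case using wf_pdec[of tbl u k r x] by simp
next
  case (Seq c1 c2)
  let ?x1 = "entc k c2 (u + lenc k c1) x"
  have a: "at tbl u (compc k c1 u ?x1)" "at tbl (u + lenc k c1) (compc k c2 (u + lenc k c1) x)"
    using at_append[of tbl u "compc k c1 u ?x1" "compc k c2 (u + lenc k c1) x"]
      Seq.prems len_compc[of k c1 u ?x1] by auto
  have i2: "wff tbl (u + lenc k c1) (compc k c2 (u + lenc k c1) x) \<and> ?x1 < length tbl \<and> fst (tbl ! ?x1) = Suc k"
    using Seq.IH(2)[OF _ _ a(2)] Seq.prems by auto
  have i1: "wff tbl u (compc k c1 u ?x1) \<and> entc k c1 u ?x1 < length tbl \<and> fst (tbl ! entc k c1 u ?x1) = Suc k"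
    using Seq.IH(1)[OF _ _ a(1)] Seq.prems i2 by auto
  show ?case using i1 i2 wff_append[of tbl u "compc k c1 u ?x1"] len_compc[of k c1 u ?x1] Seq.prems by auto
next
  case (While r c)
  let ?L = "3 + 3 * r + 6 * (k - r)"
  have a: "at tbl u (ptest k r u x (entc k c (u + ?L) u))" "at tbl (u + ?L) (compc k c (u + ?L) u)"
    using at_append[of tbl u "ptest k r u x (entc k c (u + ?L) u)"] While.prems by auto
  have u: "u < length tbl \<and> fst (tbl ! u) = Suc k"
  proof -
    have "u < length tbl" using a(1) by (auto simp: at_def ptest_def ptestb_def head_def)
    moreover have "tbl ! u = (Suc k, Rcv [(3, u+1)])"
      using at_pass[OF a(1)[unfolded ptest_def ptestb_def] refl] by (auto simp: head_def dest!: at_Cons)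
    ultimately show ?thesis by simp
  qed
  have ib: "wff tbl (u + ?L) (compc k c (u + ?L) u) \<and> entc k c (u + ?L) u < length tbl \<and> fst (tbl ! entc k c (u + ?L) u) = Suc k"
    using While.IH[OF _ _ a(2)] While.prems u by auto
  have it: "wff tbl u (ptest k r u x (entc k c (u + ?L) u))"
    using wf_ptest[OF a(1)] While.prems ib by auto
  show ?case using wff_append[OF it] ib u by simp
qed


fun rb :: "cmd \<Rightarrow> nat" where
  "rb Skip = 0"
| "rb (Inc r) = Suc r"
| "rb (Dec r) = Suc r"
| "rb (Seq c1 c2) = max (rb c1) (rb c2)"
| "rb (While r c) = max (Suc r) (rb c)"

lemma rok_rb: "rb c \<le> k \<Longrightarrow> rok k c"
  by (induction c) auto

definition seps :: "nat \<Rightarrow> nat \<Rightarrow> entry list" where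
  "seps k eP = map (\<lambda>i. (Suc i, Snd 2 (if Suc i = k then eP else Suc (Suc i)))) [0..<k]"

definition yesfrag :: "nat \<Rightarrow> nat \<Rightarrow> entry list" where
  "yesfrag k yes = [(Suc k, Snd 4 (yes+1))] @ head k (yes+1) (nxt k (yes+3) (yes+3+3*k)) @ cc k k (yes+3) (yes+3+3*k)
     @ [(Suc k, Rcv [(4, Suc (yes+3+3*k))]), (Suc k, Rcv [])]"

definition "xTof k P = Suc k + lenc k P"
definition "noof k P = xTof k P + (3 + 3 * 1 + 6 * (k - 1))"
definition "ePof k P = entc k P (Suc k) (xTof k P)"

definition mktbl :: "nat \<Rightarrow> cmd \<Rightarrow> entry list" where
  "mktbl k P = [(1, Rcv [])] @ seps k (ePof k P) @ compc k P (Suc k) (xTof k P) @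
     ptest k 1 (xTof k P) (Suc (noof k P)) (noof k P) @ [(Suc k, Rcv [])] @ yesfrag k (Suc (noof k P))"

lemma at_mid: "at (pre @ f @ pst) (length pre) f"
  unfolding at_def by (auto simp: nth_append)

lemma at_mid': "u = length pre \<Longrightarrow> at (pre @ f @ pst) u f"
  using at_mid by blast

locale S =
  fixes k :: nat and P :: cmd
  assumes k2: "2 \<le> k" and rokP: "rok k P"
begin

definition "tbl = mktbl k P"

lemma lens: "length (seps k e) = k" "length (compc k P u x) = lenc k P"
  "length (ptest k 1 u a b) = 6 + 6 * (k - 1)"
  by (auto simp: seps_def len_compc[OF rokP])

lemma at_seps: "at tbl 1 (seps k (ePof k P))"
  unfolding tbl_def mktbl_def using at_mid'[of 1 "[(1, Rcv [])]"] by simp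

lemma at_prog: "at tbl (Suc k) (compc k P (Suc k) (xTof k P))"
  unfolding tbl_def mktbl_def using at_mid'[of "Suc k" "[(1, Rcv [])] @ seps k (ePof k P)"] lens by simp

lemma at_test: "at tbl (xTof k P) (ptest k 1 (xTof k P) (Suc (noof k P)) (noof k P))"
  unfolding tbl_def mktbl_def
  using at_mid'[of "xTof k P" "[(1, Rcv [])] @ seps k (ePof k P) @ compc k P (Suc k) (xTof k P)"] lens
  by (simp add: xTof_def)

lemma at_no: "at tbl (noof k P) [(Suc k, Rcv [])]"
  unfolding tbl_def mktbl_def
  using at_mid'[of "noof k P" "[(1, Rcv [])] @ seps k (ePof k P) @ compc k P (Suc k) (xTof k P) @
     ptest k 1 (xTof k P) (Suc (noof k P)) (noof k P)" "[(Suc k, Rcv [])]" "yesfrag k (Suc (noof k P))"] lens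
  by (simp add: xTof_def noof_def)

lemma at_yes: "at tbl (Suc (noof k P)) (yesfrag k (Suc (noof k P)))"
  unfolding tbl_def mktbl_def
  using at_mid'[of "Suc (noof k P)" "[(1, Rcv [])] @ seps k (ePof k P) @ compc k P (Suc k) (xTof k P) @
     ptest k 1 (xTof k P) (Suc (noof k P)) (noof k P) @ [(Suc k, Rcv [])]" _ "[]"] lens
  by (simp add: xTof_def noof_def)

lemma len_tbl: "length tbl = Suc (noof k P) + 3 * k + 5"
  unfolding tbl_def mktbl_def using lens by (simp add: xTof_def noof_def yesfrag_def head_def)

lemma tbl0: "tbl ! 0 = (1, Rcv [])"
  unfolding tbl_def mktbl_def by simp

lemma k1: "1 \<le> k" using k2 by simp

lemma yes_first: "Suc (noof k P) < length tbl \<and> tbl ! Suc (noof k P) = (Suc k, Snd 4 (Suc (noof k P) + 1))"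
  using at_Cons[OF at_yes[unfolded yesfrag_def append_Cons append_Nil]] by simp

lemma no_e: "noof k P < length tbl \<and> tbl ! noof k P = (Suc k, Rcv [])"
  using at_Cons[OF at_no] by simp

lemma wf_yes: "wff tbl (Suc (noof k P)) (yesfrag k (Suc (noof k P)))"
proof -
  define y where "y = Suc (noof k P)"
  define b where "b = y + 3 + 3 * k"
  have a0: "at tbl y ((Suc k, Snd 4 (y+1)) # (head k (y+1) (nxt k (y+1+2) b) @ cc k k (y+1+2) b
     @ (Suc k, Rcv [(4, Suc b)]) # [(Suc k, Rcv [])]))"
    using at_yes unfolding y_def[symmetric] yesfrag_def b_def by (simp add: numeral_eq_Suc)
  note a0c = at_Cons[OF a0]
  have a: "at tbl (y+1) (head k (y+1) (nxt k (y+1+2) b) @ cc k k (y+1+2) b @ (Suc k, Rcv [(4, Suc b)]) # [(Suc k, Rcv [])])"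
    using a0c by simp
  have bb: "b = y + 1 + 2 + 3 * k" by (simp add: b_def)
  note ap = at_pass[OF a bb]
  have lb: "Suc b < length tbl" "tbl ! Suc b = (Suc k, Rcv [])" using at_Cons[OF conjunct2[OF conjunct2[OF conjunct2[OF conjunct2[OF ap]]]]] by auto
  have we: "wfe tbl b" by (rule wfe_rcv[of _ _ "Suc k"]) (use ap lb in \<open>auto simp: mk_def\<close>)
  have wr: "wff tbl (Suc b) [(Suc k, Rcv [])]" by (rule wff_Cons) (auto intro: wfe_rcv[of _ _ "Suc k"] simp: lb)
  note g = wf_pass_gen[OF a bb k1 _ we wr]
  have w0: "wfe tbl y" by (rule wfe_snd[of _ _ "Suc k" 4 "y+1"]) (use a0c g in \<open>auto simp: mk_def\<close>)
  have "wff tbl y ((Suc k, Snd 4 (y+1)) # (head k (y+1) (nxt k (y+1+2) b) @ cc k k (y+1+2) b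
     @ (Suc k, Rcv [(4, Suc b)]) # [(Suc k, Rcv [])]))"
    by (rule wff_Cons[OF w0]) (use g in simp)
  then show ?thesis unfolding y_def[symmetric] yesfrag_def b_def by (simp add: numeral_eq_Suc)
qed

lemma wf_test: "wff tbl (xTof k P) (ptest k 1 (xTof k P) (Suc (noof k P)) (noof k P)) \<and> xTof k P < length tbl \<and> fst (tbl ! xTof k P) = Suc k"
  by (rule wf_ptest[OF at_test]) (use k2 yes_first no_e in auto)

lemma wf_prog: "wff tbl (Suc k) (compc k P (Suc k) (xTof k P)) \<and> ePof k P < length tbl \<and> fst (tbl ! ePof k P) = Suc k"
  unfolding ePof_def by (rule wf_compc[OF rokP k1 at_prog]) (use wf_test in auto)

lemma seps_nth: "i < k \<Longrightarrow> tbl ! Suc i = (Suc i, Snd 2 (if Suc i = k then ePof k P else Suc (Suc i)))"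
  using at_seps unfolding at_def seps_def by auto

lemma wf_seps: "wff tbl 1 (seps k (ePof k P))"
  unfolding wff_def
proof (intro allI impI)
  fix i assume "i < length (seps k (ePof k P))"
  then have i: "i < k" by (simp add: seps_def)
  have lt: "Suc k < length tbl" using len_tbl by (simp add: noof_def xTof_def)
  show "wfe tbl (1 + i)"
  proof (cases "Suc i = k")
    case True
    show ?thesis using seps_nth[OF i] True wf_prog by (auto intro!: wfe_snd simp: mk_def)
  next
    case False
    then have i2: "Suc i < k" using i by simp
    show ?thesis using seps_nth[OF i] seps_nth[OF i2] False lt i2 by (auto intro!: wfe_snd simp: mk_def)
  qed
qed

lemma wf_tbl: "wff tbl 0 tbl"
proof -
  have w0: "wfe tbl 0" using tbl0 by (auto intro: wfe_rcv)
  have l1: "length [(1::nat, Rcv [])] = 1" by simp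
  have wno: "wff tbl (noof k P) [(Suc k, Rcv [])]" using no_e by (auto intro!: wff_Cons wfe_rcv)
  have "wff tbl (noof k P) ([(Suc k, Rcv [])] @ yesfrag k (Suc (noof k P)))"
    using wff_append[OF wno] wf_yes by simp
  then have "wff tbl (xTof k P) (ptest k 1 (xTof k P) (Suc (noof k P)) (noof k P) @ [(Suc k, Rcv [])] @ yesfrag k (Suc (noof k P)))"
    using wff_append[OF conjunct1[OF wf_test]] lens by (simp add: noof_def)
  then have "wff tbl (Suc k) (compc k P (Suc k) (xTof k P) @ ptest k 1 (xTof k P) (Suc (noof k P)) (noof k P) @ [(Suc k, Rcv [])] @ yesfrag k (Suc (noof k P)))"
    using wff_append[OF conjunct1[OF wf_prog]] lens by (simp add: xTof_def)
  then have "wff tbl 1 (seps k (ePof k P) @ compc k P (Suc k) (xTof k P) @ ptest k 1 (xTof k P) (Suc (noof k P)) (noof k P) @ [(Suc k, Rcv [])] @ yesfrag k (Suc (noof k P)))"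
    using wff_append[OF wf_seps] lens by simp
  then show ?thesis unfolding tbl_def[symmetric] mktbl_def using w0
    by (simp add: tbl_def mktbl_def wff_Cons)
qed

lemma wf_all: "i < length tbl \<Longrightarrow> wfe tbl i"
  using wf_tbl unfolding wff_def by auto

end


context S begin

definition "Tm = map (\<lambda>(q, \<alpha>, q'). (2*q+1, \<alpha>, 2*q'+1)) (tt tbl)"
definition "xx = list_encode (map encode_trans Tm)"
definition "A = (0, Send 3, 1) # chain xx @ Tm"

lemma memTm: "(q, \<alpha>, q') \<in> set Tm \<longleftrightarrow> (\<exists>i p. q = 2*i+1 \<and> q' = 2*p+1 \<and> (i, \<alpha>, p) \<in> set (tt tbl))"
  unfolding Tm_def by force

lemma memA: "(q, \<alpha>, q') \<in> set A \<longleftrightarrow> (q, \<alpha>, q') = (0, Send 3, 1) \<or> (\<exists>j<xx. (q, \<alpha>, q') = chain_tr xx j) \<or>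
   (\<exists>i p. q = 2*i+1 \<and> q' = 2*p+1 \<and> (i, \<alpha>, p) \<in> set (tt tbl))"
  unfolding A_def chain_def using memTm by auto

lemma tt1: "(1, Send 2, if 1 = k then ePof k P else 2) \<in> set (tt tbl)"
  using seps_nth[of 0] k2 len_tbl by (auto simp: mem_tt)

lemma xx_pos: "1 \<le> xx"
proof -
  have "Tm \<noteq> []" using tt1 memTm[of 3] by force
  then show ?thesis unfolding xx_def by (cases Tm) auto
qed

lemma distinct_key: "distinct (map fst l) \<Longrightarrow> (a, p1) \<in> set l \<Longrightarrow> (a, p2) \<in> set l \<Longrightarrow> p1 = p2"
  by (metis eq_key_imp_eq_value)

lemma det_tt: "(i, \<alpha>1, p1) \<in> set (tt tbl) \<Longrightarrow> (i, \<alpha>2, p2) \<in> set (tt tbl) \<Longrightarrow>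
   (\<alpha>1 = \<alpha>2 \<and> p1 = p2) \<or> (\<exists>a b. \<alpha>1 = Recv a \<and> \<alpha>2 = Recv b \<and> a \<noteq> b)"
proof -
  assume h1: "(i, \<alpha>1, p1) \<in> set (tt tbl)" and h2: "(i, \<alpha>2, p2) \<in> set (tt tbl)"
  then have i: "i < length tbl" by (simp add: mem_tt)
  have w: "wfe tbl i" by (rule wf_all[OF i])
  show ?thesis
  proof (cases "snd (tbl ! i)")
    case (Snd a p) then show ?thesis using h1 h2 by (auto simp: mem_tt)
  next
    case (Rcv l)
    then have d: "distinct (map fst l)" using w by (simp add: wfe_def)
    show ?thesis using h1 h2 Rcv distinct_key[OF d] by (auto simp: mem_tt)
  qed
qed

lemma tt0: "(0, \<alpha>, p) \<notin> set (tt tbl)"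
  using tbl0 by (simp add: mem_tt)

lemma srcodd: assumes h: "fst (chain_tr xx j) = 2*i+1" shows "j = 0 \<and> i = 0"
proof (cases "j = 0")
  case True then show ?thesis using h by (simp add: chain_tr_def)
next
  case False
  from h have "2*j = 2*i+1" using False by (simp add: chain_tr_def)
  then show ?thesis by presburger
qed

lemma detA: "(q, \<alpha>1, q1) \<in> set A \<Longrightarrow> (q, \<alpha>2, q2) \<in> set A \<Longrightarrow>
   (\<alpha>1 = \<alpha>2 \<and> q1 = q2) \<or> (\<exists>a b. \<alpha>1 = Recv a \<and> \<alpha>2 = Recv b \<and> a \<noteq> b)"
proof -
  assume h1: "(q, \<alpha>1, q1) \<in> set A" and h2: "(q, \<alpha>2, q2) \<in> set A"
  have srcne: "fst (chain_tr xx j) \<noteq> 0" for j by (simp add: chain_tr_def)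
  have srcinj: "fst (chain_tr xx j) = fst (chain_tr xx j') \<Longrightarrow> j = j'" for j j'
    by (auto simp: chain_tr_def split: if_splits)
  consider (a) "(q, \<alpha>1, q1) = (0, Send 3, 1)" | (b) j where "(q, \<alpha>1, q1) = chain_tr xx j"
      | (c) i p where "q = 2*i+1" "q1 = 2*p+1" "(i, \<alpha>1, p) \<in> set (tt tbl)"
      using h1 memA by blast
  note C1 = this
  consider (a) "(q, \<alpha>2, q2) = (0, Send 3, 1)" | (b) j where "(q, \<alpha>2, q2) = chain_tr xx j"
      | (c) i p where "q = 2*i+1" "q2 = 2*p+1" "(i, \<alpha>2, p) \<in> set (tt tbl)"
      using h2 memA by blast
  note C2 = this
  show ?thesis
  proof (cases rule: C1)
    case a
    then have q0: "q = 0" by simp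
    show ?thesis
    proof (cases rule: C2)
      case a then show ?thesis using C1 \<open>(q, \<alpha>1, q1) = (0, Send 3, 1)\<close> by simp
    next
      case (b j)
      then have "fst (chain_tr xx j) = q" by (metis fst_conv)
      then show ?thesis using srcne[of j] q0 by simp
    next
      case (c i p) then show ?thesis using q0 by simp
    qed
  next
    case (b j)
    then have qj: "fst (chain_tr xx j) = q" by (metis fst_conv)
    show ?thesis
    proof (cases rule: C2)
      case a then show ?thesis using srcne[of j] qj by simp
    next
      case (b j')
      then have "fst (chain_tr xx j') = q" by (metis fst_conv)
      then have "j = j'" using qj srcinj by simp
      then have "(q, \<alpha>1, q1) = (q, \<alpha>2, q2)" using b \<open>(q, \<alpha>1, q1) = chain_tr xx j\<close> by simp
      then show ?thesis by simp
    next
      case (c i p)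
      then have "j = 0 \<and> i = 0" using qj srcodd by simp
      then show ?thesis using c tt0 by simp
    qed
  next
    case (c i p)
    note ci = this
    show ?thesis
    proof (cases rule: C2)
      case a then show ?thesis using ci by simp
    next
      case (b j)
      then have "fst (chain_tr xx j) = q" by (metis fst_conv)
      then have "j = 0 \<and> i = 0" using ci srcodd by simp
      then show ?thesis using ci tt0 by simp
    next
      case (c i' p')
      then have "i' = i" using ci by simp
      then show ?thesis using det_tt[OF ci(3)] c ci by auto
    qed
  qed
qed

lemma step_det: "step A c \<alpha>1 c1 \<Longrightarrow> step A c \<alpha>2 c2 \<Longrightarrow> \<alpha>1 = \<alpha>2 \<and> c1 = c2"
proof -
  assume s1: "step A c \<alpha>1 c1" and s2: "step A c \<alpha>2 c2"
  obtain q w where c: "c = (q, w)" by fastforce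
  obtain q1 w1 where c1: "c1 = (q1, w1)" by fastforce
  obtain q2 w2 where c2: "c2 = (q2, w2)" by fastforce
  have t1: "(q, \<alpha>1, q1) \<in> set A" using s1 c c1 by (cases \<alpha>1) auto
  have t2: "(q, \<alpha>2, q2) \<in> set A" using s2 c c2 by (cases \<alpha>2) auto
  show ?thesis
  proof (cases "\<alpha>1 = \<alpha>2 \<and> q1 = q2")
    case True then show ?thesis using s1 s2 c c1 c2 by (cases \<alpha>1) auto
  next
    case False
    then obtain a b where "\<alpha>1 = Recv a" "\<alpha>2 = Recv b" "a \<noteq> b" using detA[OF t1 t2] by blast
    then show ?thesis using s1 s2 c c1 c2 by auto
  qed
qed

lemma prefix_run: "steps A c \<tau> c' \<Longrightarrow> steps A c \<rho> ce \<Longrightarrow> (\<forall>\<alpha> c''. \<not> step A ce \<alpha> c'') \<Longrightarrow> \<exists>\<rho>'. \<rho> = \<tau> @ \<rho>'"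
proof (induction \<tau> arbitrary: c \<rho>)
  case Nil then show ?case by auto
next
  case (Cons \<alpha> \<tau>)
  then obtain c1 where c1: "step A c \<alpha> c1" "steps A c1 \<tau> c'" by auto
  show ?case
  proof (cases \<rho>)
    case Nil then show ?thesis using Cons.prems c1 by auto
  next
    case (Cons \<beta> \<rho>1)
    then obtain c2 where c2: "step A c \<beta> c2" "steps A c2 \<rho>1 ce" using Cons.prems by auto
    have "\<alpha> = \<beta> \<and> c1 = c2" using step_det[OF c1(1) c2(1)] .
    then show ?thesis using Cons.IH[OF c1(2)] c2 Cons.prems(3) Cons by auto
  qed
qed

end


definition cnt :: "nat list \<Rightarrow> nat" where "cnt w = length (filter (\<lambda>a. a = 2 \<or> a = 3) w)"

lemma cnt_snoc: "cnt (w @ [a]) = cnt w + mk a" by (simp add: cnt_def mk_def)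
lemma cnt_Cons: "cnt (a # w) = mk a + cnt w" by (simp add: cnt_def mk_def)

context S begin

definition pot' :: "nat \<Rightarrow> nat" where "pot' q = (if even q then 1 else fst (tbl ! (q div 2)))"

definition Inv :: "config \<Rightarrow> bool" where
  "Inv c \<longleftrightarrow> fst c \<noteq> 0 \<and> cnt (snd c) = pot' (fst c) \<and> 1 \<le> pot' (fst c) \<and> (odd (fst c) \<longrightarrow> fst c div 2 < length tbl)"

lemma tbl1: "fst (tbl ! 1) = 1" using seps_nth[of 0] k2 by simp

lemma inv_step: "Inv (q, w) \<Longrightarrow> step A (q, w) \<alpha> (q', w') \<Longrightarrow> Inv (q', w')"
proof -
  assume I: "Inv (q, w)" and st: "step A (q, w) \<alpha> (q', w')"
  have t: "(q, \<alpha>, q') \<in> set A" using st by (cases \<alpha>) auto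
  consider (a) "(q, \<alpha>, q') = (0, Send 3, 1)" | (b) j where "j < xx" "(q, \<alpha>, q') = chain_tr xx j"
      | (c) i p where "q = 2*i+1" "q' = 2*p+1" "(i, \<alpha>, p) \<in> set (tt tbl)"
      using t memA by blast
  then show ?thesis
  proof cases
    case a then show ?thesis using I by (simp add: Inv_def)
  next
    case b
    have e: "\<alpha> = Send 1" "q = (if j = 0 then 1 else 2*j)" "q' = (if Suc j = xx then 3 else 2*j+2)"
      using b(2) by (auto simp: chain_tr_def)
    have w': "w' = w @ [1]" using st e by simp
    have pq: "pot' q = 1" using e(2) tbl0 by (auto simp: pot'_def)
    have pq': "pot' q' = 1" using e(3) tbl1 by (auto simp: pot'_def)
    have l: "odd q' \<longrightarrow> q' div 2 < length tbl" using e(3) len_tbl by auto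
    show ?thesis using I w' pq pq' l e(3) by (auto simp: Inv_def cnt_snoc mk_def)
  next
    case c
    have i: "i < length tbl" using c(3) by (simp add: mem_tt)
    have wi: "wfe tbl i" by (rule wf_all[OF i])
    have pi: "pot' q = fst (tbl ! i)" using c(1) by (simp add: pot'_def)
    have pp: "pot' q' = fst (tbl ! p)" using c(2) by (simp add: pot'_def)
    show ?thesis
    proof (cases "snd (tbl ! i)")
      case (Snd a p0)
      then have "\<alpha> = Send a" "p = p0" using c(3) by (auto simp: mem_tt)
      then have "w' = w @ [a]" "p < length tbl" "fst (tbl ! p) = fst (tbl ! i) + mk a"
        using st wi Snd by (auto simp: wfe_def)
      then show ?thesis using I pi pp c(2) by (auto simp: Inv_def cnt_snoc)
    next
      case (Rcv l)
      then obtain a where a: "\<alpha> = Recv a" "(a, p) \<in> set l" using c(3) by (auto simp: mem_tt)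
      then have "w = a # w'" "p < length tbl" "fst (tbl ! p) + mk a = fst (tbl ! i)"
        using st wi Rcv by (auto simp: wfe_def)
      moreover have "1 \<le> fst (tbl ! p)" using wf_all[OF \<open>p < length tbl\<close>] by (simp add: wfe_def)
      ultimately show ?thesis using I pi pp c(2) by (auto simp: Inv_def cnt_Cons)
    qed
  qed
qed

lemma inv_steps: "steps A c \<tau> c' \<Longrightarrow> Inv c \<Longrightarrow> Inv c'"
proof (induction \<tau> arbitrary: c)
  case Nil then show ?case by simp
next
  case (Cons \<alpha> \<tau>)
  then obtain c1 where "step A c \<alpha> c1" "steps A c1 \<tau> c'" by auto
  moreover have "Inv c1" using inv_step[of "fst c" "snd c" \<alpha> "fst c1" "snd c1"] calculation Cons.prems by simp
  ultimately show ?case using Cons.IH by blast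
qed

lemma from0: "(0, \<alpha>, q) \<in> set A \<Longrightarrow> \<alpha> = Send 3 \<and> q = 1"
proof -
  assume t: "(0, \<alpha>, q) \<in> set A"
  have nc: "\<not> (\<exists>j. (0, \<alpha>, q) = chain_tr xx j)" by (auto simp: chain_tr_def split: if_splits)
  have "(0, \<alpha>, q) = (0, Send 3, 1)" using t nc unfolding memA by auto
  then show ?thesis by simp
qed

lemma first_step: "step A (0, []) \<alpha> c1 \<Longrightarrow> \<alpha> = Send 3 \<and> c1 = (1, [3])"
proof -
  assume st: "step A (0, []) \<alpha> c1"
  obtain q1 w1 where c1: "c1 = (q1, w1)" by fastforce
  have t: "(0, \<alpha>, q1) \<in> set A" and snd: "\<exists>a. \<alpha> = Send a" using st c1 by (cases \<alpha>; auto)+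
  have "\<alpha> = Send 3 \<and> q1 = 1" using from0[OF t] .
  then show ?thesis using st c1 by auto
qed

lemma R1A: "R1 A 0"
  unfolding R1_def
proof (intro allI impI)
  fix \<tau> q w assume h: "steps A (0, []) \<tau> (q, w)"
  show "\<tau> = [] \<or> w \<noteq> []"
  proof (cases \<tau>)
    case Nil then show ?thesis by simp
  next
    case (Cons \<alpha> \<tau>')
    then obtain c1 where c1: "step A (0, []) \<alpha> c1" "steps A c1 \<tau>' (q, w)" using h by auto
    then have "c1 = (1, [3])" using first_step by blast
    moreover have "Inv (1, [3])" using tbl0 len_tbl by (simp add: Inv_def pot'_def cnt_def)
    ultimately have "Inv (q, w)" using inv_steps c1(2) by blast
    then have "1 \<le> cnt w" by (simp add: Inv_def)
    then show ?thesis by (auto simp: cnt_def)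
  qed
qed

lemma R2A: "R2 A 0"
  unfolding R2_def
proof (intro allI impI)
  fix \<alpha> q assume t: "(0, \<alpha>, q) \<in> set A"
  show "\<exists>a. \<alpha> = Send a" using from0[OF t] by auto
qed

end


context S begin

lemma map_steps: "steps (tt tbl) (q, w) \<tau> (q', w') \<Longrightarrow> steps A (2*q+1, w) \<tau> (2*q'+1, w')"
proof (induction \<tau> arbitrary: q w)
  case Nil then show ?case by simp
next
  case (Cons \<alpha> \<tau>)
  then obtain q1 w1 where s: "step (tt tbl) (q, w) \<alpha> (q1, w1)" "steps (tt tbl) (q1, w1) \<tau> (q', w')"
    by (auto simp del: step.simps)
  have t: "(q, \<alpha>, q1) \<in> set (tt tbl)" using s(1) by (cases \<alpha>) auto
  then have "(2*q+1, \<alpha>, 2*q1+1) \<in> set A" using memA by blast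
  then have "step A (2*q+1, w) \<alpha> (2*q1+1, w1)" using s(1) by (cases \<alpha>) auto
  then show ?case using Cons.IH[OF s(2)] by auto
qed

lemma map_reach: "reach (tt tbl) (q, w) (q', w') \<Longrightarrow> reach A (2*q+1, w) (2*q'+1, w')"
  unfolding reach_def using map_steps by blast

lemma reachA_snd: "(q, Send a, q') \<in> set A \<Longrightarrow> reach A (q, w) (q', w @ [a])"
  unfolding reach_def by (intro exI[of _ "[Send a]"]) auto

lemma chain_run: "j < xx \<Longrightarrow> reach A (fst (chain_tr xx j), 3 # replicate j 1) (3, 3 # replicate xx 1)"
proof (induction "xx - j" arbitrary: j rule: less_induct)
  case less
  have t: "chain_tr xx j \<in> set A" using less.prems by (simp add: A_def chain_def)
  show ?case
  proof (cases "Suc j = xx")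
    case True
    then have "(fst (chain_tr xx j), Send 1, 3) \<in> set A" using t by (simp add: chain_tr_def)
    from reachA_snd[OF this, of "3 # replicate j 1"] show ?thesis using True[symmetric] by (simp add: replicate_append_same)
  next
    case False
    then have j1: "Suc j < xx" using less.prems by simp
    have "(fst (chain_tr xx j), Send 1, fst (chain_tr xx (Suc j))) \<in> set A" using t False by (simp add: chain_tr_def)
    from reachA_snd[OF this, of "3 # replicate j 1"] have r1: "reach A (fst (chain_tr xx j), 3 # replicate j 1) (fst (chain_tr xx (Suc j)), 3 # replicate (Suc j) 1)"
      by (simp add: replicate_append_same)
    have r2: "reach A (fst (chain_tr xx (Suc j)), 3 # replicate (Suc j) 1) (3, 3 # replicate xx 1)"
      using less.hyps[of "Suc j"] j1 less.prems by simp
    show ?thesis using reach_trans[OF r1 r2] .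
  qed
qed

lemma seps_run: "j < k \<Longrightarrow> reach (tt tbl) (Suc j, w) (ePof k P, w @ replicate (k - j) 2)"
proof (induction "k - j" arbitrary: j w rule: less_induct)
  case less
  have lt: "Suc j < length tbl" using len_tbl less.prems by (simp add: noof_def xTof_def)
  show ?case
  proof (cases "Suc j = k")
    case True
    have "reach (tt tbl) (Suc j, w) (ePof k P, w @ [2])" using reach_snd[OF lt] seps_nth[OF less.prems] True by simp
    moreover have "k - j = 1" using True by simp
    ultimately show ?thesis by simp
  next
    case False
    then have j1: "Suc j < k" using less.prems by simp
    have r1: "reach (tt tbl) (Suc j, w) (Suc (Suc j), w @ [2])" using reach_snd[OF lt] seps_nth[OF less.prems] False by simp
    have r2: "reach (tt tbl) (Suc (Suc j), w @ [2]) (ePof k P, (w @ [2]) @ replicate (k - Suc j) 2)"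
      using less.hyps[of "Suc j" "w @ [2]"] j1 by simp
    have "k - j = Suc (k - Suc j)" using j1 by simp
    then show ?thesis using reach_trans[OF r1 r2] by (simp add: replicate_append_same[symmetric])
  qed
qed

definition "s0 = (\<lambda>i. if i = 0 then xx else 0)"

lemma qenc_s0: "qenc k s0 = 3 # replicate xx 1 @ replicate k 2"
proof -
  have "[0..<k] = 0 # [1..<k]" using k2 by (simp add: upt_conv_Cons)
  moreover have "map s0 [1..<k] = replicate (k - 1) 0" by (auto simp: s0_def intro: nth_equalityI)
  moreover have "blocks (replicate n 0) = replicate n 2" for n by (induction n) (auto simp: blk_def)
  ultimately have "qenc k s0 = 3 # replicate xx 1 @ 2 # replicate (k - 1) 2"
    by (simp add: qenc_def s0_def blk_def)
  then show ?thesis using k2 by (cases k) auto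
qed

lemma init_run: "reach A (0, []) (2 * ePof k P + 1, qenc k s0)"
proof -
  have r0: "reach A (0, []) (1, [3])" using reachA_snd[of 0 3 1 "[]"] by (simp add: A_def)
  have r1: "reach A (1, [3]) (3, 3 # replicate xx 1)" using chain_run[of 0] xx_pos by (simp add: chain_tr_def)
  have r2: "reach A (3, 3 # replicate xx 1) (2 * ePof k P + 1, 3 # replicate xx 1 @ replicate k 2)"
    using map_reach[OF seps_run[of 0 "3 # replicate xx 1"]] k2 by simp
  show ?thesis using reach_trans[OF r0 reach_trans[OF r1 r2]] qenc_s0 by simp
qed

lemma prog_run: "exec P s0 s1 \<Longrightarrow> reach A (0, []) (2 * (if s1 1 = 0 then Suc (noof k P) else noof k P) + 1, qenc k s1)"
proof -
  assume e: "exec P s0 s1"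
  have r1: "reach (tt tbl) (ePof k P, qenc k s0) (xTof k P, qenc k s1)"
    using sim[OF e rokP at_prog] by (simp add: ePof_def)
  have r2: "reach (tt tbl) (xTof k P, qenc k s1) (if s1 1 = 0 then Suc (noof k P) else noof k P, qenc k s1)"
    using run_test[OF at_test, of s1] k2 by simp
  show ?thesis using reach_trans[OF init_run map_reach[OF reach_trans[OF r1 r2]]] .
qed

lemma no_stuck: "\<not> step A (2 * noof k P + 1, w) \<alpha> c"
proof
  assume st: "step A (2 * noof k P + 1, w) \<alpha> c"
  obtain q' w' where c: "c = (q', w')" by fastforce
  have t: "(2 * noof k P + 1, \<alpha>, q') \<in> set A" using st c by (cases \<alpha>) auto
  have npos: "noof k P \<noteq> 0" by (simp add: noof_def)
  have D: "(2 * noof k P + 1, \<alpha>, q') = (0, Send 3, 1) \<or> (\<exists>j<xx. (2 * noof k P + 1, \<alpha>, q') = chain_tr xx j) \<or>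
   (\<exists>i p. 2 * noof k P + 1 = 2*i+1 \<and> q' = 2*p+1 \<and> (i, \<alpha>, p) \<in> set (tt tbl))"
    using t memA by blast
  then show False
  proof (elim disjE exE conjE)
    assume "(2 * noof k P + 1, \<alpha>, q') = (0, Send 3, 1)" then show False by simp
  next
    fix j assume "(2 * noof k P + 1, \<alpha>, q') = chain_tr xx j"
    then have "fst (chain_tr xx j) = 2 * noof k P + 1" by (metis fst_conv)
    then have "noof k P = 0" using srcodd by blast
    then show False using npos by simp
  next
    fix i p assume "2 * noof k P + 1 = 2*i+1" "(i, \<alpha>, p) \<in> set (tt tbl)"
    then have "(noof k P, \<alpha>, p) \<in> set (tt tbl)" by simp
    then show False using no_e by (simp add: mem_tt)
  qed
qed

lemma yes_run: "reach A (0, []) (2 * Suc (noof k P) + 1, qenc k s1) \<Longrightarrow> can_receive A 0 4"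
proof -
  assume r0: "reach A (0, []) (2 * Suc (noof k P) + 1, qenc k s1)"
  define y where "y = Suc (noof k P)"
  define b where "b = y + 3 + 3 * k"
  have a0: "at tbl y ((Suc k, Snd 4 (y+1)) # (head k (y+1) (nxt k (y+1+2) b) @ cc k k (y+1+2) b
     @ (Suc k, Rcv [(4, Suc b)]) # [(Suc k, Rcv [])]))"
    using at_yes unfolding y_def[symmetric] yesfrag_def b_def by (simp add: numeral_eq_Suc)
  note a0c = at_Cons[OF a0]
  have a: "at tbl (y+1) (head k (y+1) (nxt k (y+1+2) b) @ cc k k (y+1+2) b @ (Suc k, Rcv [(4, Suc b)]) # [(Suc k, Rcv [])])"
    using a0c by simp
  have bb: "b = y + 1 + 2 + 3 * k" by (simp add: b_def)
  note ap = at_pass[OF a bb]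
  have r1: "reach (tt tbl) (y, qenc k s1) (y+1, qenc k s1 @ [4])"
    using reach_snd[of y tbl 4 "y+1" "qenc k s1"] a0c by simp
  have r2: "reach (tt tbl) (y+1, 3 # blocks (map s1 [0..<k]) @ [4]) (b, [4] @ [3] @ blocks (map s1 [0..<k]))"
    by (rule pass_pre[OF conjunct1[OF ap] conjunct1[OF conjunct2[OF ap]]]) simp
  have r12: "reach (tt tbl) (y, qenc k s1) (b, [4, 3] @ blocks (map s1 [0..<k]))"
    using reach_trans[OF r1] r2 by (simp add: qenc_def)
  obtain \<rho> where \<rho>: "steps A (0, []) \<rho> (2 * b + 1, [4, 3] @ blocks (map s1 [0..<k]))"
    using reach_trans[OF r0 map_reach[OF r12[unfolded y_def]]] unfolding reach_def y_def by auto
  have "(b, Recv 4, Suc b) \<in> set (tt tbl)" using ap by (simp add: mem_tt)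
  then have "(2 * b + 1, Recv 4, 2 * Suc b + 1) \<in> set A" using memA by blast
  then have "steps A (2 * b + 1, [4, 3] @ blocks (map s1 [0..<k])) [Recv 4] (2 * Suc b + 1, 3 # blocks (map s1 [0..<k]))"
    by simp
  then have "steps A (0, []) (\<rho> @ [Recv 4]) (2 * Suc b + 1, 3 # blocks (map s1 [0..<k]))"
    using \<rho> steps_append by blast
  then show ?thesis unfolding can_receive_def is_trace_def by blast
qed

lemma not_receive: "reach A (0, []) (2 * noof k P + 1, w) \<Longrightarrow> \<not> can_receive A 0 4"
proof
  assume r: "reach A (0, []) (2 * noof k P + 1, w)" and cr: "can_receive A 0 4"
  obtain \<rho> where \<rho>: "steps A (0, []) \<rho> (2 * noof k P + 1, w)" "Recv 4 \<notin> set \<rho>" using r unfolding reach_def by blast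
  obtain \<tau> c where "steps A (0, []) (\<tau> @ [Recv 4]) c" using cr unfolding can_receive_def is_trace_def by blast
  then obtain \<rho>' where "\<rho> = (\<tau> @ [Recv 4]) @ \<rho>'" using prefix_run[OF _ \<rho>(1)] no_stuck by blast
  then show False using \<rho>(2) by simp
qed

end


theorem lemma3p1:
  shows "\<not> (\<exists>f. \<forall>\<Delta> q0 m. R1 \<Delta> q0 \<and> R2 \<Delta> q0 \<longrightarrow>
             eval f [encode_instance \<Delta> q0 m] (if can_receive \<Delta> q0 m then 1 else 0))"
proof
  assume "\<exists>f. \<forall>\<Delta> q0 m. R1 \<Delta> q0 \<and> R2 \<Delta> q0 \<longrightarrow>
             eval f [encode_instance \<Delta> q0 m] (if can_receive \<Delta> q0 m then 1 else 0)"
  then obtain F where F: "\<And>\<Delta> q0 m. R1 \<Delta> q0 \<Longrightarrow> R2 \<Delta> q0 \<Longrightarrow>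
             eval F [encode_instance \<Delta> q0 m] (if can_receive \<Delta> q0 m then 1 else 0)" by blast
  define G where "G = Cnf F [Ef]"
  define Pc where "Pc = comp G [0] 1 2"
  define k where "k = max 2 (rb Pc)"
  interpret S k Pc
    by unfold_locales (auto simp: k_def intro: rok_rb)
  define v where "v = (if can_receive A 0 4 then 1 else 0 :: nat)"
  have eF: "eval F [encode_instance A 0 4] v" unfolding v_def by (rule F[OF R1A R2A])
  have eE: "eval Ef [xx] (encode_instance A 0 4)"
    unfolding A_def by (rule eval_Ef) (simp add: xx_def)
  have eG: "eval G (map s0 [0]) v" unfolding G_def using evCn1[OF eE eF] by (simp add: s0_def)
  obtain s1 where s1: "exec Pc s0 s1" "post 2 1 v s0 s1"
    using CCD[OF CC_all eG, of 2 1] unfolding Pc_def by auto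
  have v1: "s1 1 = v" using s1(2) by (simp add: post_def)
  have r: "reach A (0, []) (2 * (if s1 1 = 0 then Suc (noof k Pc) else noof k Pc) + 1, qenc k s1)"
    by (rule prog_run[OF s1(1)])
  show False
  proof (cases "can_receive A 0 4")
    case True
    then have "s1 1 \<noteq> 0" using v1 v_def by simp
    then have "reach A (0, []) (2 * noof k Pc + 1, qenc k s1)" using r by simp
    then show False using not_receive True by blast
  next
    case False
    then have "s1 1 = 0" using v1 v_def by simp
    then have "reach A (0, []) (2 * Suc (noof k Pc) + 1, qenc k s1)" using r by simp
    then show False using yes_run False by blast
  qed
qed


end
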